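(* Let $\mathcal{L}$ be a polar space. Then for all $p,q\in\mathcal{L}$ the fractional join of $p$ and $q$ equals $\frac12(p\vee_L q)+\frac12(p\vee_R q)$ (as formal combinations, coefficients of equal elements being added); i.e., the fractional join operation of $\mathcal{L}$ is $\frac12\vee_L+\frac12\vee_R$.
   Context: $\mathcal{S}_2=\{-1,0,1\}$ is the poset with minimum $0$ and incomparable $-1,1$; $\mathcal{S}_2^n$ has the componentwise order. A polar space of rank $n$ is a meet-semilattice $\mathcal{L}$ that is a union of subsemilattices called polar frames such that (P0) each polar frame is isomorphic to $\mathcal{S}_2^n$; (P1) any two chains of $\mathcal{L}$ lie in a common polar frame; (P2) if polar frames $\mathcal{F},\mathcal{F}'$ both contain chains $C,D$, there is an isomorphism $\mathcal{F}\to\mathcal{F}'$ fixing $C$ and $D$ pointwise. A polar space is a modular semilattice (a meet-semilattice of finite rank, rank function $r$, whose principal ideals are modular lattices and in which $x\vee y\vee z$ exists whenever $x\vee y,y\vee z,z\vee x$ exist). Left/right join: for $p,q$, there is a unique maximal $u\in[p\wedge q,q]$ such that $p\vee u$ exists; $p\vee_L q:=p\vee u$. Similarly $p\vee_R q:=q\vee v$ for the unique maximal $v\in[p\wedge q,p]$ with $q\vee v$ existing. Fractional join: for $p,q$ let $I(p,q)$ be the set of elements on shortest $p$–$q$ paths of the covering graph of $\mathcal{L}$; $r(u;p,q)=(r(u\wedge p)-r(p\wedge q),r(u\wedge q)-r(p\wedge q))$; $\mathrm{Conv}I(p,q)$ the convex hull of these vectors; $\mathcal{E}(p,q)$ the set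 of $u\in I(p,q)$ with $r(u;p,q)$ a componentwise-maximal extreme point of $\mathrm{Conv}I(p,q)$; $C(u;p,q)=\{w\in\mathbf{R}^2_{\ge0}:\langle w,r(u;p,q)\rangle=\max_{z\in\mathrm{Conv}I(p,q)}\langle w,z\rangle\}$, which has the form $\{(x,y)\in\mathbf{R}^2_{\ge 0}:y\cos\alpha\le x\sin\alpha,\ y\cos\beta\ge x\sin\beta\}$ with $0\le\beta\le\alpha\le\pi/2$, and $[C(u;p,q)]=\frac{\sin\alpha}{\sin\alpha+\cos\alpha}-\frac{\sin\beta}{\sin\beta+\cos\beta}$. The fractional join of $p,q$ is the formal combination $\sum_{u\in\mathcal{E}(p,q)}[C(u;p,q)]\,u$. *)

theory Defs
  imports "HOL-Analysis.Analysis"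
begin

definition is_meet :: "'a::order set \<Rightarrow> 'a \<Rightarrow> 'a \<Rightarrow> 'a \<Rightarrow> bool" where
  "is_meet L x y z \<longleftrightarrow> z \<in> L \<and> z \<le> x \<and> z \<le> y \<and> (\<forall>w\<in>L. w \<le> x \<and> w \<le> y \<longrightarrow> w \<le> z)"

definition meet :: "'a::order set \<Rightarrow> 'a \<Rightarrow> 'a \<Rightarrow> 'a" where
  "meet L x y = (THE z. is_meet L x y z)"

definition is_join :: "'a::order set \<Rightarrow> 'a \<Rightarrow> 'a \<Rightarrow> 'a \<Rightarrow> bool" where
  "is_join L x y z \<longleftrightarrow> z \<in> L \<and> x \<le> z \<and> y \<le> z \<and> (\<forall>w\<in>L. x \<le> w \<and> y \<le> w \<longrightarrow> z \<le> w)"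

definition has_join :: "'a::order set \<Rightarrow> 'a \<Rightarrow> 'a \<Rightarrow> bool" where
  "has_join L x y \<longleftrightarrow> (\<exists>z. is_join L x y z)"

definition join :: "'a::order set \<Rightarrow> 'a \<Rightarrow> 'a \<Rightarrow> 'a" where
  "join L x y = (THE z. is_join L x y z)"

definition meet_semilattice :: "'a::order set \<Rightarrow> bool" where
  "meet_semilattice L \<longleftrightarrow> (\<forall>x\<in>L. \<forall>y\<in>L. \<exists>z. is_meet L x y z)"

text \<open>S_2 = {-1,0,1} with minimum 0 and -1, 1 incomparable; S_2^n is represented by
  functions nat => int supported on {0..<n}, ordered componentwise.\<close>

definition S2_le :: "int \<Rightarrow> int \<Rightarrow> bool" where
  "S2_le a b \<longleftrightarrow> a = 0 \<or> a = b"

definition S2n :: "nat \<Rightarrow> (nat \<Rightarrow> int) set" where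
  "S2n n = {x. (\<forall>i<n. x i \<in> {-1, 0, 1}) \<and> (\<forall>i\<ge>n. x i = 0)}"

definition S2n_le :: "(nat \<Rightarrow> int) \<Rightarrow> (nat \<Rightarrow> int) \<Rightarrow> bool" where
  "S2n_le x y \<longleftrightarrow> (\<forall>i. S2_le (x i) (y i))"

definition is_chain :: "'a::order set \<Rightarrow> 'a set \<Rightarrow> bool" where
  "is_chain L C \<longleftrightarrow> C \<subseteq> L \<and> Complete_Partial_Order.chain (\<le>) C"

definition order_iso_on :: "('a::order \<Rightarrow> 'b::order) \<Rightarrow> 'a set \<Rightarrow> 'b set \<Rightarrow> bool" where
  "order_iso_on f A B \<longleftrightarrow> bij_betw f A B \<and> (\<forall>x\<in>A. \<forall>y\<in>A. x \<le> y \<longleftrightarrow> f x \<le> f y)"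

definition subsemilattice :: "'a::order set \<Rightarrow> 'a set \<Rightarrow> bool" where
  "subsemilattice L F \<longleftrightarrow> F \<subseteq> L \<and> (\<forall>x\<in>F. \<forall>y\<in>F. meet L x y \<in> F)"

definition polar_space :: "'a::order set \<Rightarrow> 'a set set \<Rightarrow> nat \<Rightarrow> bool" where
  "polar_space L Frames n \<longleftrightarrow>
     meet_semilattice L \<and>
     (\<forall>F\<in>Frames. subsemilattice L F) \<and>
     L = \<Union> Frames \<and>
     \<comment> \<open>(P0)\<close>
     (\<forall>F\<in>Frames. \<exists>f. bij_betw f F (S2n n) \<and> (\<forall>x\<in>F. \<forall>y\<in>F. x \<le> y \<longleftrightarrow> S2n_le (f x) (f y))) \<and>
     \<comment> \<open>(P1)\<close>
     (\<forall>C D. is_chain L C \<and> is_chain L D \<longrightarrow> (\<exists>F\<in>Frames. C \<subseteq> F \<and> D \<subseteq> F)) \<and>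
     \<comment> \<open>(P2)\<close>
     (\<forall>F\<in>Frames. \<forall>F'\<in>Frames. \<forall>C D. is_chain L C \<and> is_chain L D \<and> C \<subseteq> F \<and> D \<subseteq> F
        \<and> C \<subseteq> F' \<and> D \<subseteq> F' \<longrightarrow>
        (\<exists>\<phi>. order_iso_on \<phi> F F' \<and> (\<forall>x\<in>C \<union> D. \<phi> x = x)))"

text \<open>Rank: length (number of covering steps) of a longest chain below x.\<close>
definition rk :: "'a::order set \<Rightarrow> 'a \<Rightarrow> nat" where
  "rk L x = Max {card C | C. is_chain L C \<and> finite C \<and> (\<forall>y\<in>C. y \<le> x)} - 1"

definition covers :: "'a::order set \<Rightarrow> 'a \<Rightarrow> 'a \<Rightarrow> bool" where
  "covers L x y \<longleftrightarrow> x \<in> L \<and> y \<in> L \<and> x < y \<and> \<not> (\<exists>z\<in>L. x < z \<and> z < y)"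

definition adj :: "'a::order set \<Rightarrow> 'a \<Rightarrow> 'a \<Rightarrow> bool" where
  "adj L x y \<longleftrightarrow> covers L x y \<or> covers L y x"

definition cpath :: "'a::order set \<Rightarrow> 'a list \<Rightarrow> 'a \<Rightarrow> 'a \<Rightarrow> bool" where
  "cpath L xs p q \<longleftrightarrow> xs \<noteq> [] \<and> hd xs = p \<and> last xs = q \<and> set xs \<subseteq> L \<and>
     (\<forall>i. Suc i < length xs \<longrightarrow> adj L (xs ! i) (xs ! Suc i))"

definition shortest_cpath :: "'a::order set \<Rightarrow> 'a list \<Rightarrow> 'a \<Rightarrow> 'a \<Rightarrow> bool" where
  "shortest_cpath L xs p q \<longleftrightarrow> cpath L xs p q \<and>
     (\<forall>ys. cpath L ys p q \<longrightarrow> length xs \<le> length ys)"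

definition Ipq :: "'a::order set \<Rightarrow> 'a \<Rightarrow> 'a \<Rightarrow> 'a set" where
  "Ipq L p q = {u. \<exists>xs. shortest_cpath L xs p q \<and> u \<in> set xs}"

definition left_join :: "'a::order set \<Rightarrow> 'a \<Rightarrow> 'a \<Rightarrow> 'a" where
  "left_join L p q = join L p (THE u. u \<in> L \<and> meet L p q \<le> u \<and> u \<le> q \<and> has_join L p u \<and>
       (\<forall>v\<in>L. meet L p q \<le> v \<and> v \<le> q \<and> has_join L p v \<and> u \<le> v \<longrightarrow> v = u))"

definition right_join :: "'a::order set \<Rightarrow> 'a \<Rightarrow> 'a \<Rightarrow> 'a" where
  "right_join L p q = join L q (THE v. v \<in> L \<and> meet L p q \<le> v \<and> v \<le> p \<and> has_join L q v \<and>
       (\<forall>w\<in>L. meet L p q \<le> w \<and> w \<le> p \<and> has_join L q w \<and> v \<le> w \<longrightarrow> w = v))"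

definition rvec :: "'a::order set \<Rightarrow> 'a \<Rightarrow> 'a \<Rightarrow> 'a \<Rightarrow> real \<times> real" where
  "rvec L u p q = (real (rk L (meet L u p)) - real (rk L (meet L p q)),
                   real (rk L (meet L u q)) - real (rk L (meet L p q)))"

definition ConvI :: "'a::order set \<Rightarrow> 'a \<Rightarrow> 'a \<Rightarrow> (real \<times> real) set" where
  "ConvI L p q = convex hull ((\<lambda>u. rvec L u p q) ` Ipq L p q)"

definition Epq :: "'a::order set \<Rightarrow> 'a \<Rightarrow> 'a \<Rightarrow> 'a set" where
  "Epq L p q = {u \<in> Ipq L p q. rvec L u p q extreme_point_of ConvI L p q \<and>
      (\<forall>z\<in>ConvI L p q. fst (rvec L u p q) \<le> fst z \<and> snd (rvec L u p q) \<le> snd z \<longrightarrow> z = rvec L u p q)}"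

definition Cone :: "'a::order set \<Rightarrow> 'a \<Rightarrow> 'a \<Rightarrow> 'a \<Rightarrow> (real \<times> real) set" where
  "Cone L u p q = {w. 0 \<le> fst w \<and> 0 \<le> snd w \<and>
      w \<bullet> rvec L u p q = (SUP z\<in>ConvI L p q. w \<bullet> z)}"

definition cone_weight :: "(real \<times> real) set \<Rightarrow> real" where
  "cone_weight C = (THE c. \<exists>\<alpha> \<beta>. 0 \<le> \<beta> \<and> \<beta> \<le> \<alpha> \<and> \<alpha> \<le> pi / 2 \<and>
      C = {(x, y). 0 \<le> x \<and> 0 \<le> y \<and> y * cos \<alpha> \<le> x * sin \<alpha> \<and> y * cos \<beta> \<ge> x * sin \<beta>} \<and>
      c = sin \<alpha> / (sin \<alpha> + cos \<alpha>) - sin \<beta> / (sin \<beta> + cos \<beta>))"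

text \<open>The fractional join as a formal combination: coefficient function on elements.\<close>
definition frac_join :: "'a::order set \<Rightarrow> 'a \<Rightarrow> 'a \<Rightarrow> 'a \<Rightarrow> real" where
  "frac_join L p q = (\<lambda>u. if u \<in> Epq L p q then cone_weight (Cone L u p q) else 0)"

end

theory Submission
  imports Defs
begin


definition vmeet :: "(nat \<Rightarrow> int) \<Rightarrow> (nat \<Rightarrow> int) \<Rightarrow> nat \<Rightarrow> int" where
  "vmeet v w = (\<lambda>i. if v i = w i then v i else 0)"
definition vjoin :: "(nat \<Rightarrow> int) \<Rightarrow> (nat \<Rightarrow> int) \<Rightarrow> nat \<Rightarrow> int" where
  "vjoin v w = (\<lambda>i. if v i = 0 then w i else v i)"
definition vcompat :: "(nat \<Rightarrow> int) \<Rightarrow> (nat \<Rightarrow> int) \<Rightarrow> bool" where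
  "vcompat v w \<longleftrightarrow> (\<forall>i. v i = 0 \<or> w i = 0 \<or> v i = w i)"
definition supp :: "nat \<Rightarrow> (nat \<Rightarrow> int) \<Rightarrow> nat" where
  "supp n v = (\<Sum>i<n. if v i = 0 then 0 else 1)"

lemma S2n_le_refl: "S2n_le v v" by (simp add: S2n_le_def S2_le_def)
lemma S2n_le_trans: "S2n_le u v \<Longrightarrow> S2n_le v w \<Longrightarrow> S2n_le u w"
  by (auto simp add: S2n_le_def S2_le_def) (metis)
lemma S2n_le_antisym: "S2n_le u v \<Longrightarrow> S2n_le v u \<Longrightarrow> u = v"
  by (rule ext) (auto simp add: S2n_le_def S2_le_def, metis)

lemma vmeet_S2n: "v \<in> S2n n \<Longrightarrow> w \<in> S2n n \<Longrightarrow> vmeet v w \<in> S2n n"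
  by (auto simp add: S2n_def vmeet_def)
lemma vjoin_S2n: "v \<in> S2n n \<Longrightarrow> w \<in> S2n n \<Longrightarrow> vjoin v w \<in> S2n n"
  by (auto simp add: S2n_def vjoin_def)
lemma vmeet_le1: "S2n_le (vmeet v w) v" by (auto simp add: S2n_le_def S2_le_def vmeet_def)
lemma vmeet_le2: "S2n_le (vmeet v w) w" by (auto simp add: S2n_le_def S2_le_def vmeet_def)
lemma vmeet_glb: "S2n_le u v \<Longrightarrow> S2n_le u w \<Longrightarrow> S2n_le u (vmeet v w)"
  by (auto simp add: S2n_le_def S2_le_def vmeet_def) metis
lemma vjoin_le1: "S2n_le v (vjoin v w)" by (auto simp add: S2n_le_def S2_le_def vjoin_def)
lemma vjoin_le2: "vcompat v w \<Longrightarrow> S2n_le w (vjoin v w)"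
  by (auto simp add: S2n_le_def S2_le_def vjoin_def vcompat_def)
lemma vjoin_lub: "S2n_le v u \<Longrightarrow> S2n_le w u \<Longrightarrow> S2n_le (vjoin v w) u"
  by (auto simp add: S2n_le_def S2_le_def vjoin_def)
lemma compat_ub: "S2n_le v u \<Longrightarrow> S2n_le w u \<Longrightarrow> vcompat v w"
  by (auto simp add: S2n_le_def S2_le_def vcompat_def) (metis)

lemma supp_mono: "S2n_le v w \<Longrightarrow> supp n v \<le> supp n w"
  unfolding supp_def by (rule sum_mono) (auto simp: S2n_le_def S2_le_def)

lemma supp_strict:
  assumes "v \<in> S2n n" "w \<in> S2n n" "S2n_le v w" "v \<noteq> w"
  shows "supp n v < supp n w"
proof -
  obtain i where i: "v i \<noteq> w i" using assms(4) by auto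
  have "i < n" using i assms(1,2) by (auto simp: S2n_def) (metis not_less)
  have vi: "v i = 0" "w i \<noteq> 0" using assms(3) i by (auto simp: S2n_le_def S2_le_def)
  show ?thesis unfolding supp_def
    apply (rule sum_strict_mono_ex1)
    using assms(3) vi \<open>i < n\<close> by (auto simp: S2n_le_def S2_le_def)
qed

lemma supp_zero:
  assumes "v \<in> S2n n" "supp n v = 0" shows "v = (\<lambda>_. 0)"
proof
  fix i show "v i = 0"
  proof (cases "i < n")
    case True
    have "\<forall>j\<in>{..<n}. (if v j = 0 then 0 else 1::nat) = 0"
      using assms(2) unfolding supp_def by (subst sum_eq_0_iff[symmetric]) auto
    then show ?thesis using True by (auto split: if_splits)
  next
    case False then show ?thesis using assms(1) by (auto simp: S2n_def)
  qed
qed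

lemma supp_upd:
  assumes "i < n" "v i \<noteq> 0"
  shows "supp n (v(i := 0)) + 1 = supp n v"
proof -
  have "supp n v = (\<Sum>j\<in>{..<n}-{i}. if v j = 0 then 0 else 1) + (if v i = 0 then 0 else 1)"
    unfolding supp_def using assms by (subst sum.remove[of _ i]) auto
  moreover have "supp n (v(i:=0)) = (\<Sum>j\<in>{..<n}-{i}. if v j = 0 then 0 else 1)"
    unfolding supp_def using assms by (subst sum.remove[of _ i]) (auto intro!: sum.cong)
  ultimately show ?thesis using assms by simp
qed

lemma chain_card_S2n:
  assumes "finite D" "D \<subseteq> S2n n" "\<forall>a\<in>D. \<forall>b\<in>D. S2n_le a b \<or> S2n_le b a"
    "\<forall>d\<in>D. S2n_le d v"
  shows "card D \<le> supp n v + 1"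
proof -
  have inj: "inj_on (supp n) D"
  proof (rule inj_onI)
    fix a b assume ab: "a \<in> D" "b \<in> D" "supp n a = supp n b"
    show "a = b"
    proof (rule ccontr)
      assume "a \<noteq> b"
      then show False using assms(2,3) ab supp_strict[of a n b] supp_strict[of b n a] by fastforce
    qed
  qed
  have "supp n ` D \<subseteq> {..supp n v}" using assms(4) supp_mono by auto
  then have "card (supp n ` D) \<le> card {..supp n v}"
    by (intro card_mono) auto
  then have "card (supp n ` D) \<le> supp n v + 1" by simp
  then show ?thesis using card_image[OF inj] by simp
qed

lemma chain_exists_S2n:
  "v \<in> S2n n \<Longrightarrow> \<exists>D. finite D \<and> D \<subseteq> S2n n \<and> (\<forall>a\<in>D. \<forall>b\<in>D. S2n_le a b \<or> S2n_le b a)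
     \<and> (\<forall>d\<in>D. S2n_le d v) \<and> card D = supp n v + 1"
proof (induction "supp n v" arbitrary: v)
  case 0
  then show ?case by (intro exI[of _ "{v}"]) (auto simp: S2n_le_refl)
next
  case (Suc k)
  then have "v \<noteq> (\<lambda>_. 0)" by (auto simp: supp_def)
  then obtain i where i: "v i \<noteq> 0" by auto
  have "i < n" using i Suc.prems by (auto simp: S2n_def) (metis not_less)
  define v' where "v' = v(i := 0)"
  have sv: "supp n v' + 1 = supp n v" using supp_upd[of i n v, OF \<open>i<n\<close> i] v'_def by simp
  have v'S: "v' \<in> S2n n" using Suc.prems by (auto simp: S2n_def v'_def)
  have le: "S2n_le v' v" by (auto simp: S2n_le_def S2_le_def v'_def)
  obtain D where D: "finite D" "D \<subseteq> S2n n" "\<forall>a\<in>D. \<forall>b\<in>D. S2n_le a b \<or> S2n_le b a"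
     "\<forall>d\<in>D. S2n_le d v'" "card D = supp n v' + 1"
    using Suc.hyps(1)[of v'] sv Suc.hyps(2) v'S by auto
  have "v \<notin> D"
  proof
    assume "v \<in> D" then have "S2n_le v v'" using D by auto
    then show False using i by (auto simp: S2n_le_def S2_le_def v'_def)
  qed
  show ?case
    apply (intro exI[of _ "insert v D"])
    using D \<open>v \<notin> D\<close> Suc.prems le sv S2n_le_trans S2n_le_refl by auto
qed


lemma is_meet_unique: "is_meet L x y a \<Longrightarrow> is_meet L x y b \<Longrightarrow> a = b"
  unfolding is_meet_def by (blast intro: order.antisym)
lemma is_join_unique: "is_join L x y a \<Longrightarrow> is_join L x y b \<Longrightarrow> a = b"
  unfolding is_join_def by (blast intro: order.antisym)
lemma join_eq: "is_join L x y z \<Longrightarrow> join L x y = z"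
  unfolding join_def using is_join_unique by blast
lemma has_join_is: "has_join L x y \<Longrightarrow> is_join L x y (join L x y)"
  unfolding has_join_def using join_eq by metis

lemma chainI: "C \<subseteq> L \<Longrightarrow> (\<forall>x\<in>C. \<forall>y\<in>C. x \<le> y \<or> y \<le> x) \<Longrightarrow> is_chain L C"
  by (auto simp: is_chain_def chain_def)

lemma iso_inv:
  assumes "order_iso_on \<phi> F G" "b \<in> G"
  shows "inv_into F \<phi> b \<in> F" "\<phi> (inv_into F \<phi> b) = b"
  using assms by (auto simp: order_iso_on_def bij_betw_def inv_into_into f_inv_into_f)

lemma iso_le:
  assumes "order_iso_on \<phi> F G" "a \<in> F" "b \<in> F"
  shows "a \<le> b \<longleftrightarrow> \<phi> a \<le> \<phi> b"
  using assms by (auto simp: order_iso_on_def)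

locale pspace =
  fixes L :: "'a::order set" and Frames :: "'a set set" and n :: nat
  assumes PS: "polar_space L Frames n"
begin

lemma PSd: "meet_semilattice L" "\<forall>F\<in>Frames. subsemilattice L F" "L = \<Union> Frames"
  "\<forall>F\<in>Frames. \<exists>f. bij_betw f F (S2n n) \<and> (\<forall>x\<in>F. \<forall>y\<in>F. x \<le> y \<longleftrightarrow> S2n_le (f x) (f y))"
  "\<forall>C D. is_chain L C \<and> is_chain L D \<longrightarrow> (\<exists>F\<in>Frames. C \<subseteq> F \<and> D \<subseteq> F)"
  "\<forall>F\<in>Frames. \<forall>F'\<in>Frames. \<forall>C D. is_chain L C \<and> is_chain L D \<and> C \<subseteq> F \<and> D \<subseteq> F
        \<and> C \<subseteq> F' \<and> D \<subseteq> F' \<longrightarrow>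
        (\<exists>\<phi>. order_iso_on \<phi> F F' \<and> (\<forall>x\<in>C \<union> D. \<phi> x = x))"
  using PS unfolding polar_space_def
  apply -
  apply (elim conjE, assumption)+
  done

lemma msl: "meet_semilattice L" by (rule PSd(1))
lemma frame_sub: "F \<in> Frames \<Longrightarrow> F \<subseteq> L" using PSd(3) by blast
lemma frame_meet: "F \<in> Frames \<Longrightarrow> x \<in> F \<Longrightarrow> y \<in> F \<Longrightarrow> meet L x y \<in> F"
  using PSd(2) unfolding subsemilattice_def by blast
lemma P1: "is_chain L C \<Longrightarrow> is_chain L D \<Longrightarrow> \<exists>F\<in>Frames. C \<subseteq> F \<and> D \<subseteq> F"
  using PSd(5) by blast
lemma P2: "F \<in> Frames \<Longrightarrow> G \<in> Frames \<Longrightarrow> is_chain L C \<Longrightarrow> is_chain L D \<Longrightarrow>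
   C \<subseteq> F \<Longrightarrow> D \<subseteq> F \<Longrightarrow> C \<subseteq> G \<Longrightarrow> D \<subseteq> G \<Longrightarrow> \<exists>\<phi>. order_iso_on \<phi> F G \<and> (\<forall>x\<in>C \<union> D. \<phi> x = x)"
  using PSd(6) by blast
lemma P0: "F \<in> Frames \<Longrightarrow> \<exists>f. bij_betw f F (S2n n) \<and> (\<forall>x\<in>F. \<forall>y\<in>F. x \<le> y \<longleftrightarrow> S2n_le (f x) (f y))"
  using PSd(4) by blast

lemma meet_is: assumes "x \<in> L" "y \<in> L" shows "is_meet L x y (meet L x y)"
proof -
  obtain z where z: "is_meet L x y z" using msl assms unfolding meet_semilattice_def by blast
  have "meet L x y = z" unfolding meet_def using z is_meet_unique by blast
  then show ?thesis using z by simp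
qed
lemma meet_in: "x \<in> L \<Longrightarrow> y \<in> L \<Longrightarrow> meet L x y \<in> L" using meet_is is_meet_def by metis
lemma meet_le1: "x \<in> L \<Longrightarrow> y \<in> L \<Longrightarrow> meet L x y \<le> x" using meet_is is_meet_def by metis
lemma meet_le2: "x \<in> L \<Longrightarrow> y \<in> L \<Longrightarrow> meet L x y \<le> y" using meet_is is_meet_def by metis
lemma meet_glb: "x \<in> L \<Longrightarrow> y \<in> L \<Longrightarrow> w \<in> L \<Longrightarrow> w \<le> x \<Longrightarrow> w \<le> y \<Longrightarrow> w \<le> meet L x y"
  using meet_is is_meet_def by metis
lemma meet_eqI: "x \<in> L \<Longrightarrow> y \<in> L \<Longrightarrow> z \<in> L \<Longrightarrow> z \<le> x \<Longrightarrow> z \<le> y \<Longrightarrow>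
   (\<And>w. w \<in> L \<Longrightarrow> w \<le> x \<Longrightarrow> w \<le> y \<Longrightarrow> w \<le> z) \<Longrightarrow> meet L x y = z"
  by (meson meet_glb meet_in meet_le1 meet_le2 order.antisym)
lemma meet_comm: "x \<in> L \<Longrightarrow> y \<in> L \<Longrightarrow> meet L x y = meet L y x"
  by (rule meet_eqI) (auto intro: meet_in meet_le1 meet_le2 meet_glb)
lemma meet_absorb: "x \<in> L \<Longrightarrow> y \<in> L \<Longrightarrow> x \<le> y \<Longrightarrow> meet L x y = x"
  by (rule meet_eqI) auto
lemma meet_absorb2: "x \<in> L \<Longrightarrow> y \<in> L \<Longrightarrow> y \<le> x \<Longrightarrow> meet L x y = y"
  by (rule meet_eqI) auto

definition crd :: "'a set \<Rightarrow> 'a \<Rightarrow> nat \<Rightarrow> int" where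
  "crd F = (SOME f. bij_betw f F (S2n n) \<and> (\<forall>x\<in>F. \<forall>y\<in>F. x \<le> y \<longleftrightarrow> S2n_le (f x) (f y)))"

lemma crd: "F \<in> Frames \<Longrightarrow> bij_betw (crd F) F (S2n n) \<and> (\<forall>x\<in>F. \<forall>y\<in>F. x \<le> y \<longleftrightarrow> S2n_le (crd F x) (crd F y))"
  unfolding crd_def using P0 by (rule someI_ex)

definition ic :: "'a set \<Rightarrow> (nat \<Rightarrow> int) \<Rightarrow> 'a" where
  "ic F v = inv_into F (crd F) v"

lemma crd_in: "F \<in> Frames \<Longrightarrow> x \<in> F \<Longrightarrow> crd F x \<in> S2n n"
  using crd bij_betwE by blast
lemma crd_le: "F \<in> Frames \<Longrightarrow> x \<in> F \<Longrightarrow> y \<in> F \<Longrightarrow> x \<le> y \<longleftrightarrow> S2n_le (crd F x) (crd F y)"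
  using crd by blast
lemma crd_inj: "F \<in> Frames \<Longrightarrow> x \<in> F \<Longrightarrow> y \<in> F \<Longrightarrow> crd F x = crd F y \<Longrightarrow> x = y"
  using crd by (meson bij_betw_def inj_onD)
lemma ic_in: "F \<in> Frames \<Longrightarrow> v \<in> S2n n \<Longrightarrow> ic F v \<in> F"
  unfolding ic_def using crd by (metis bij_betw_def inv_into_into)
lemma crd_ic: "F \<in> Frames \<Longrightarrow> v \<in> S2n n \<Longrightarrow> crd F (ic F v) = v"
  unfolding ic_def using crd by (metis bij_betw_def f_inv_into_f)
lemma ic_crd: "F \<in> Frames \<Longrightarrow> x \<in> F \<Longrightarrow> ic F (crd F x) = x"
  unfolding ic_def using crd by (metis bij_betw_def inv_into_f_f)

lemma frame_lub_join:
  assumes F: "F \<in> Frames" and xyz: "x \<in> F" "y \<in> F" "z \<in> F" "x \<le> z" "y \<le> z"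
    and lub: "\<forall>u\<in>F. x \<le> u \<and> y \<le> u \<longrightarrow> z \<le> u"
  shows "is_join L x y z"
proof -
  have FL: "F \<subseteq> L" using frame_sub F by auto
  have xL: "x \<in> L" and yL: "y \<in> L" and zL: "z \<in> L" using FL xyz by auto
  have "z \<le> w" if w: "w \<in> L" "x \<le> w" "y \<le> w" for w
  proof -
    define m where "m = meet L z w"
    have mL: "m \<in> L" and mz: "m \<le> z" and mw: "m \<le> w" using meet_in meet_le1 meet_le2 zL w m_def by auto
    have xm: "x \<le> m" and ym: "y \<le> m" using meet_glb zL w xyz xL yL m_def by auto
    have c1: "is_chain L {x,m,z}" using xL mL zL xm mz \<open>x \<le> z\<close> by (intro chainI) auto
    have c2: "is_chain L {y,m,z}" using yL mL zL ym mz \<open>y \<le> z\<close> by (intro chainI) auto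
    obtain G where G: "G \<in> Frames" "{x,m,z} \<subseteq> G" "{y,m,z} \<subseteq> G" using P1[OF c1 c2] by auto
    have c3: "is_chain L {x,z}" using xL zL \<open>x \<le> z\<close> by (intro chainI) auto
    have c4: "is_chain L {y,z}" using yL zL \<open>y \<le> z\<close> by (intro chainI) auto
    obtain \<phi> where phi: "order_iso_on \<phi> F G" "\<forall>a\<in>{x,z} \<union> {y,z}. \<phi> a = a"
      using P2[OF F G(1) c3 c4] xyz G by auto
    define m' where "m' = inv_into F \<phi> m"
    have m': "m' \<in> F" "\<phi> m' = m" using iso_inv[OF phi(1)] G m'_def by auto
    have "x \<le> m'" using iso_le[OF phi(1) xyz(1) m'(1)] phi(2) m' xm by auto
    moreover have "y \<le> m'" using iso_le[OF phi(1) xyz(2) m'(1)] phi(2) m' ym by auto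
    ultimately have "z \<le> m'" using lub m' by auto
    then have "z \<le> m" using iso_le[OF phi(1) xyz(3) m'(1)] phi(2) m' by auto
    then show ?thesis using mw by auto
  qed
  then show ?thesis using zL xyz unfolding is_join_def by auto
qed

lemma frame_ub:
  assumes F: "F \<in> Frames" and xy: "x \<in> F" "y \<in> F" and w: "w \<in> L" "x \<le> w" "y \<le> w"
  shows "\<exists>u\<in>F. x \<le> u \<and> y \<le> u"
proof -
  have FL: "F \<subseteq> L" using frame_sub F by auto
  have xL: "x \<in> L" and yL: "y \<in> L" using FL xy by auto
  have c1: "is_chain L {x,w}" using xL w by (intro chainI) auto
  have c2: "is_chain L {y,w}" using yL w by (intro chainI) auto
  obtain G where G: "G \<in> Frames" "{x,w} \<subseteq> G" "{y,w} \<subseteq> G" using P1[OF c1 c2] by auto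
  have c3: "is_chain L {x}" "is_chain L {y}" using xL yL by (auto intro: chainI)
  obtain \<phi> where phi: "order_iso_on \<phi> F G" "\<forall>a\<in>{x} \<union> {y}. \<phi> a = a"
    using P2[OF F G(1) c3] xy G by auto
  define u where "u = inv_into F \<phi> w"
  have u: "u \<in> F" "\<phi> u = w" using iso_inv[OF phi(1)] G u_def by auto
  have "x \<le> u" using iso_le[OF phi(1) xy(1) u(1)] phi(2) u w by auto
  moreover have "y \<le> u" using iso_le[OF phi(1) xy(2) u(1)] phi(2) u w by auto
  ultimately show ?thesis using u by auto
qed

lemma frame_join:
  assumes F: "F \<in> Frames" and xy: "x \<in> F" "y \<in> F" and c: "vcompat (crd F x) (crd F y)"
  shows "is_join L x y (ic F (vjoin (crd F x) (crd F y)))"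
proof -
  let ?v = "vjoin (crd F x) (crd F y)"
  have vS: "?v \<in> S2n n" using vjoin_S2n crd_in F xy by auto
  show ?thesis
  proof (rule frame_lub_join[OF F xy])
    show "ic F ?v \<in> F" using ic_in F vS by auto
    show "x \<le> ic F ?v" using crd_le[OF F xy(1) ic_in[OF F vS]] crd_ic[OF F vS] vjoin_le1 by auto
    show "y \<le> ic F ?v" using crd_le[OF F xy(2) ic_in[OF F vS]] crd_ic[OF F vS] vjoin_le2[OF c] by auto
    show "\<forall>u\<in>F. x \<le> u \<and> y \<le> u \<longrightarrow> ic F ?v \<le> u"
    proof (intro ballI impI)
      fix u assume u: "u \<in> F" "x \<le> u \<and> y \<le> u"
      have "S2n_le (crd F x) (crd F u)" "S2n_le (crd F y) (crd F u)"
        using crd_le[OF F] u xy by auto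
      then have "S2n_le ?v (crd F u)" by (rule vjoin_lub)
      then show "ic F ?v \<le> u" using crd_le[OF F ic_in[OF F vS] u(1)] crd_ic[OF F vS] by simp
    qed
  qed
qed

lemma frame_compat:
  assumes F: "F \<in> Frames" and xy: "x \<in> F" "y \<in> F" and w: "w \<in> L" "x \<le> w" "y \<le> w"
  shows "vcompat (crd F x) (crd F y)"
proof -
  obtain u where "u \<in> F" "x \<le> u" "y \<le> u" using frame_ub[OF assms] by auto
  then have "S2n_le (crd F x) (crd F u)" "S2n_le (crd F y) (crd F u)" using crd_le[OF F] xy by auto
  then show ?thesis by (rule compat_ub)
qed

lemma frame_meet_crd:
  assumes F: "F \<in> Frames" and xy: "x \<in> F" "y \<in> F"
  shows "crd F (meet L x y) = vmeet (crd F x) (crd F y)"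
proof -
  have FL: "F \<subseteq> L" using frame_sub F by auto
  let ?v = "vmeet (crd F x) (crd F y)"
  have vS: "?v \<in> S2n n" using vmeet_S2n crd_in F xy by auto
  let ?z = "ic F ?v"
  have zF: "?z \<in> F" using ic_in F vS by auto
  have mF: "meet L x y \<in> F" using frame_meet F xy by auto
  have "?z \<le> x" "?z \<le> y" using crd_le[OF F zF] xy crd_ic[OF F vS] vmeet_le1 vmeet_le2 by auto
  then have "?z \<le> meet L x y" using meet_glb FL zF xy by auto
  moreover have "meet L x y \<le> ?z"
  proof -
    have "meet L x y \<le> x" "meet L x y \<le> y" using meet_le1 meet_le2 FL xy by blast+
    then have "S2n_le (crd F (meet L x y)) (crd F x)" "S2n_le (crd F (meet L x y)) (crd F y)"
      using crd_le[OF F mF] xy by auto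
    then have "S2n_le (crd F (meet L x y)) ?v" by (rule vmeet_glb)
    then show ?thesis using crd_le[OF F mF zF] crd_ic[OF F vS] by simp
  qed
  ultimately have "meet L x y = ?z" by auto
  then show ?thesis using crd_ic[OF F vS] by simp
qed

lemma frame2: "x \<in> L \<Longrightarrow> y \<in> L \<Longrightarrow> \<exists>F\<in>Frames. x \<in> F \<and> y \<in> F"
  using P1[of "{x}" "{y}"] by (auto intro: chainI)

lemma frame_chain2: "x \<in> L \<Longrightarrow> y \<in> L \<Longrightarrow> x \<le> y \<Longrightarrow> \<exists>F\<in>Frames. x \<in> F \<and> y \<in> F"
  using frame2 by blast

lemma rk_frame:
  assumes F: "F \<in> Frames" and x: "x \<in> F"
  shows "rk L x = supp n (crd F x)"
proof -
  have FL: "F \<subseteq> L" using frame_sub F by auto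
  have xL: "x \<in> L" using FL x by auto
  let ?s = "supp n (crd F x)"
  let ?Cs = "{card C | C. is_chain L C \<and> finite C \<and> (\<forall>y\<in>C. y \<le> x)}"
  have bound: "card C \<le> ?s + 1" if C: "is_chain L C" "finite C" "\<forall>y\<in>C. y \<le> x" for C
  proof -
    have cx: "is_chain L (insert x C)" using C xL unfolding is_chain_def chain_def by auto
    obtain G where G: "G \<in> Frames" "insert x C \<subseteq> G" using P1[OF cx cx] by auto
    have c1: "is_chain L {x}" using xL by (auto intro: chainI)
    obtain \<phi> where phi: "order_iso_on \<phi> F G" "\<forall>a\<in>{x} \<union> {x}. \<phi> a = a"
      using P2[OF F G(1) c1 c1] x G by auto
    let ?psi = "inv_into F \<phi>"
    have inj: "inj_on ?psi G" using phi(1) unfolding order_iso_on_def bij_betw_def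
      by (intro inj_on_inv_into) auto
    have phx: "\<phi> x = x" using phi(2) by auto
    have psix: "?psi x = x" using inv_into_f_f[of \<phi> F x] phi(1) x phx
      unfolding order_iso_on_def bij_betw_def by auto
    let ?D = "crd F ` ?psi ` C"
    have psiC: "?psi ` C \<subseteq> F" using iso_inv(1)[OF phi(1)] G by auto
    have cardD: "card ?D = card C"
    proof -
      have "inj_on (crd F) (?psi ` C)" using inj_on_subset[OF bij_betw_imp_inj_on[OF conjunct1[OF crd[OF F]]] psiC] .
      then have "card ?D = card (?psi ` C)" by (rule card_image)
      also have "\<dots> = card C"
      proof -
        have "C \<subseteq> G" using G by auto
        then show ?thesis using card_image[OF inj_on_subset[OF inj]] by blast
      qed
      finally show ?thesis .
    qed
    have le_psi: "a \<le> b \<Longrightarrow> ?psi a \<le> ?psi b" if "a \<in> G" "b \<in> G" for a b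
      using iso_le[OF phi(1) iso_inv(1)[OF phi(1) that(1)] iso_inv(1)[OF phi(1) that(2)]]
        iso_inv(2)[OF phi(1)] that by auto
    have "card ?D \<le> ?s + 1"
    proof (rule chain_card_S2n)
      show "finite ?D" using C by auto
      show "?D \<subseteq> S2n n" using psiC crd_in F by auto
      show "\<forall>a\<in>?D. \<forall>b\<in>?D. S2n_le a b \<or> S2n_le b a"
      proof (intro ballI)
        fix a b assume "a \<in> ?D" "b \<in> ?D"
        then obtain a' b' where ab: "a' \<in> C" "b' \<in> C" "a = crd F (?psi a')" "b = crd F (?psi b')" by auto
        have "a' \<le> b' \<or> b' \<le> a'" using C(1) ab unfolding is_chain_def chain_def by auto
        moreover have "?psi a' \<in> F" "?psi b' \<in> F" using psiC ab by auto
        moreover have "a' \<in> G" "b' \<in> G" using G ab by auto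
        ultimately show "S2n_le a b \<or> S2n_le b a" using le_psi crd_le[OF F] ab(3,4) by blast
      qed
      show "\<forall>d\<in>?D. S2n_le d (crd F x)"
      proof
        fix d assume "d \<in> ?D"
        then obtain c where c: "c \<in> C" "d = crd F (?psi c)" by auto
        have "?psi c \<le> ?psi x" using le_psi G c C(3) by auto
        moreover have "?psi c \<in> F" using psiC c by auto
        ultimately show "S2n_le d (crd F x)" using crd_le[OF F _ x] psix c(2) by simp
      qed
    qed
    then show ?thesis using cardD by simp
  qed
  obtain D where D: "finite D" "D \<subseteq> S2n n" "\<forall>a\<in>D. \<forall>b\<in>D. S2n_le a b \<or> S2n_le b a"
     "\<forall>d\<in>D. S2n_le d (crd F x)" "card D = ?s + 1"
    using chain_exists_S2n[OF crd_in[OF F x]] by auto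
  have icD: "ic F ` D \<subseteq> F" using ic_in F D(2) by auto
  have "?s + 1 \<in> ?Cs"
  proof -
    have ch: "is_chain L (ic F ` D)"
    proof (rule chainI)
      show "ic F ` D \<subseteq> L" using icD FL by auto
      show "\<forall>a\<in>ic F ` D. \<forall>b\<in>ic F ` D. a \<le> b \<or> b \<le> a"
      proof (intro ballI)
        fix a b assume "a \<in> ic F ` D" "b \<in> ic F ` D"
        then obtain a' b' where ab: "a' \<in> D" "b' \<in> D" "a = ic F a'" "b = ic F b'" by auto
        have S: "a' \<in> S2n n" "b' \<in> S2n n" using ab D(2) by auto
        have "S2n_le a' b' \<or> S2n_le b' a'" using D(3) ab by auto
        moreover have e1: "ic F a' \<le> ic F b' \<longleftrightarrow> S2n_le a' b'"
          using crd_le[OF F ic_in[OF F S(1)] ic_in[OF F S(2)]] crd_ic[OF F S(1)] crd_ic[OF F S(2)] by simp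
        moreover have e2: "ic F b' \<le> ic F a' \<longleftrightarrow> S2n_le b' a'"
          using crd_le[OF F ic_in[OF F S(2)] ic_in[OF F S(1)]] crd_ic[OF F S(1)] crd_ic[OF F S(2)] by simp
        ultimately show "a \<le> b \<or> b \<le> a" using ab(3,4) by blast
      qed
    qed
    have below: "\<forall>y\<in>ic F ` D. y \<le> x"
    proof
      fix y assume "y \<in> ic F ` D"
      then obtain a' where a: "a' \<in> D" "y = ic F a'" by auto
      have S: "a' \<in> S2n n" using a D(2) by auto
      show "y \<le> x" using crd_le[OF F ic_in[OF F S] x] crd_ic[OF F S] a D(4) by auto
    qed
    have cardeq: "card (ic F ` D) = ?s + 1"
    proof -
      have "inj_on (ic F) D"
      proof (rule inj_onI)
        fix a b assume "a \<in> D" "b \<in> D" "ic F a = ic F b"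
        then show "a = b" using crd_ic[OF F] D(2) by (metis in_mono)
      qed
      then show ?thesis using D(5) card_image by fastforce
    qed
    have "\<exists>C. ?s+1 = card C \<and> is_chain L C \<and> finite C \<and> (\<forall>y\<in>C. y \<le> x)"
      using ch below cardeq D(1) by (intro exI[of _ "ic F ` D"]) simp
    then show ?thesis by (simp only: mem_Collect_eq)
  qed
  moreover have sub: "?Cs \<subseteq> {..?s+1}"
  proof
    fix c assume "c \<in> ?Cs"
    then obtain C where "c = card C" "is_chain L C" "finite C" "\<forall>y\<in>C. y \<le> x" by blast
    then show "c \<in> {..?s+1}" using bound[of C] by simp
  qed
  ultimately have "Max ?Cs = ?s + 1" using Max_eqI[of ?Cs "?s+1"] finite_subset[OF sub] by blast
  then show ?thesis unfolding rk_def by simp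
qed

end




lemma supp_join_meet:
  assumes "vcompat v w"
  shows "supp n (vjoin v w) + supp n (vmeet v w) = supp n v + supp n w"
  unfolding supp_def sum.distrib[symmetric]
  by (rule sum.cong) (use assms in \<open>auto simp: vjoin_def vmeet_def vcompat_def\<close>)

lemma adj_sym: "adj L x y \<longleftrightarrow> adj L y x" by (auto simp: adj_def)

lemma cpath_alt: "cpath L xs a b \<longleftrightarrow> xs \<noteq> [] \<and> hd xs = a \<and> last xs = b \<and> set xs \<subseteq> L \<and> successively (adj L) xs"
  unfolding cpath_def successively_conv_nth by auto

lemma cpath_rev: "cpath L xs a b \<Longrightarrow> cpath L (rev xs) b a"
  unfolding cpath_alt by (auto simp: hd_rev last_rev adj_sym)

lemma cpath_append: "cpath L xs a b \<Longrightarrow> cpath L ys b c \<Longrightarrow> cpath L (xs @ tl ys) a c"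
  unfolding cpath_alt
  apply (cases ys)
   apply simp
  apply (auto simp: successively_append_iff successively_Cons)
  done

context pspace
begin

lemma rk_mono: assumes "x \<in> L" "y \<in> L" "x \<le> y" shows "rk L x \<le> rk L y"
proof -
  obtain F where F: "F \<in> Frames" "x \<in> F" "y \<in> F" using frame2 assms by blast
  show ?thesis using rk_frame[OF F(1,2)] rk_frame[OF F(1,3)] crd_le[OF F] assms supp_mono by auto
qed

lemma rk_strict: assumes "x \<in> L" "y \<in> L" "x < y" shows "rk L x < rk L y"
proof -
  obtain F where F: "F \<in> Frames" "x \<in> F" "y \<in> F" using frame2 assms by blast
  have "crd F x \<noteq> crd F y" using crd_inj[OF F] assms by auto
  then show ?thesis using rk_frame[OF F(1,2)] rk_frame[OF F(1,3)] crd_le[OF F] assms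
      supp_strict crd_in F by auto
qed

lemma rk_eq: "x \<in> L \<Longrightarrow> y \<in> L \<Longrightarrow> x \<le> y \<Longrightarrow> rk L x = rk L y \<Longrightarrow> x = y"
  using rk_strict by fastforce

lemma join_exists: assumes "x \<in> L" "y \<in> L" "w \<in> L" "x \<le> w" "y \<le> w" shows "has_join L x y"
proof -
  obtain F where F: "F \<in> Frames" "x \<in> F" "y \<in> F" using frame2 assms by blast
  show ?thesis using frame_join[OF F frame_compat[OF F assms(3-5)]] unfolding has_join_def by blast
qed

lemma join_in: "has_join L x y \<Longrightarrow> join L x y \<in> L" using has_join_is is_join_def by metis
lemma join_ge1: "has_join L x y \<Longrightarrow> x \<le> join L x y" using has_join_is is_join_def by metis
lemma join_ge2: "has_join L x y \<Longrightarrow> y \<le> join L x y" using has_join_is is_join_def by metis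
lemma join_lub: "has_join L x y \<Longrightarrow> w \<in> L \<Longrightarrow> x \<le> w \<Longrightarrow> y \<le> w \<Longrightarrow> join L x y \<le> w"
  using has_join_is is_join_def by metis

lemma modular:
  assumes xy: "x \<in> L" "y \<in> L" and h: "has_join L x y"
  shows "rk L (join L x y) + rk L (meet L x y) = rk L x + rk L y"
proof -
  obtain F where F: "F \<in> Frames" "x \<in> F" "y \<in> F" using frame2 xy by blast
  have c: "vcompat (crd F x) (crd F y)"
    using frame_compat[OF F join_in[OF h] join_ge1[OF h] join_ge2[OF h]] .
  let ?v = "vjoin (crd F x) (crd F y)"
  have vS: "?v \<in> S2n n" using vjoin_S2n crd_in F by auto
  have j: "join L x y = ic F ?v" using join_eq frame_join[OF F c] by blast
  have "rk L (join L x y) = supp n ?v" using j rk_frame[OF F(1) ic_in[OF F(1) vS]] crd_ic[OF F(1) vS] by simp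
  moreover have "rk L (meet L x y) = supp n (vmeet (crd F x) (crd F y))"
    using rk_frame[OF F(1) frame_meet[OF F]] frame_meet_crd[OF F] by simp
  ultimately show ?thesis using supp_join_meet[OF c] rk_frame[OF F(1,2)] rk_frame[OF F(1,3)] by simp
qed

lemma cover_rk:
  assumes cv: "covers L x y"
  shows "rk L y = Suc (rk L x)"
proof -
  have xy: "x \<in> L" "y \<in> L" "x < y" using cv by (auto simp: covers_def)
  obtain F where F: "F \<in> Frames" "x \<in> F" "y \<in> F" using frame2 xy by blast
  define X where "X = crd F x"
  define Y where "Y = crd F y"
  have XS: "X \<in> S2n n" and YS: "Y \<in> S2n n" using crd_in F X_def Y_def by auto
  have XY: "S2n_le X Y" using crd_le[OF F] xy X_def Y_def by auto
  have "X \<noteq> Y" using crd_inj[OF F] xy X_def Y_def by auto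
  then obtain i where i: "X i \<noteq> Y i" by auto
  have "i < n" using i XS YS by (auto simp: S2n_def) (metis not_less)
  have Xi: "X i = 0" "Y i \<noteq> 0" using XY i by (auto simp: S2n_le_def S2_le_def)
  define Z where "Z = X(i := Y i)"
  have ZS: "Z \<in> S2n n" using XS YS \<open>i<n\<close> by (auto simp: S2n_def Z_def)
  have XZ: "S2n_le X Z" using Xi by (auto simp: S2n_le_def S2_le_def Z_def)
  have ZY: "S2n_le Z Y" using XY by (auto simp: S2n_le_def S2_le_def Z_def)
  have "Z(i := 0) = X" using Xi by (auto simp: Z_def)
  then have sZ: "supp n X + 1 = supp n Z" using supp_upd[of i n Z] \<open>i<n\<close> Xi by (simp add: Z_def)
  show ?thesis
  proof (cases "Z = Y")
    case True
    then show ?thesis using sZ rk_frame[OF F(1,2)] rk_frame[OF F(1,3)] X_def Y_def by simp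
  next
    case False
    define z where "z = ic F Z"
    have zF: "z \<in> F" and cz: "crd F z = Z" using ic_in crd_ic F ZS z_def by auto
    have "x \<le> z" "z \<le> y" using crd_le[OF F(1)] F zF cz XZ ZY X_def Y_def by auto
    moreover have "x \<noteq> z"
    proof
      assume "x = z"
      then have "X = Z" using cz X_def by simp
      then have "Z i = 0" using Xi(1) by simp
      moreover have "Z i = Y i" by (simp add: Z_def)
      ultimately show False using Xi(2) by simp
    qed
    moreover have "z \<noteq> y" using cz Y_def False by auto
    moreover have "z \<in> L" using zF frame_sub F by auto
    ultimately show ?thesis using cv unfolding covers_def by auto
  qed
qed

lemma meet_sub: "x \<in> L \<Longrightarrow> y \<in> L \<Longrightarrow> q \<in> L \<Longrightarrow> x \<le> y \<Longrightarrow> meet L x q \<le> meet L y q"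
  by (meson meet_glb meet_in meet_le1 meet_le2 order_trans)

lemma cover_meet:
  assumes cv: "covers L x y" and q: "q \<in> L"
  shows "rk L (meet L y q) \<le> rk L (meet L x q) + 1" "rk L (meet L x q) \<le> rk L (meet L y q)"
proof -
  have xy: "x \<in> L" "y \<in> L" "x \<le> y" using cv by (auto simp: covers_def)
  show "rk L (meet L x q) \<le> rk L (meet L y q)" using rk_mono meet_sub meet_in xy q by auto
  define a where "a = meet L y q"
  have aL: "a \<in> L" "a \<le> y" "a \<le> q" using meet_in meet_le1 meet_le2 xy q a_def by auto
  have h: "has_join L x a" using join_exists[OF xy(1) aL(1) xy(2) xy(3) aL(2)] .
  have "meet L x a = meet L x q"
  proof (rule meet_eqI[OF xy(1) aL(1) meet_in[OF xy(1) q]])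
    show "meet L x q \<le> x" using meet_le1 xy q by auto
    show "meet L x q \<le> a" unfolding a_def using meet_sub xy q by auto
    fix w assume "w \<in> L" "w \<le> x" "w \<le> a"
    then show "w \<le> meet L x q" using meet_glb xy q aL by (meson order_trans)
  qed
  moreover have "rk L (join L x a) \<le> rk L y"
    using rk_mono join_in[OF h] xy join_lub[OF h xy(2) xy(3) aL(2)] by auto
  ultimately show "rk L (meet L y q) \<le> rk L (meet L x q) + 1"
    using modular[OF xy(1) aL(1) h] cover_rk[OF cv] a_def by simp
qed

definition dd :: "'a \<Rightarrow> 'a \<Rightarrow> int" where
  "dd x y = int (rk L x) + int (rk L y) - 2 * int (rk L (meet L x y))"

lemma dd_self: "x \<in> L \<Longrightarrow> dd x x = 0"
  unfolding dd_def using meet_absorb[of x x] by simp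

lemma cover_dd:
  assumes cv: "covers L x y" and q: "q \<in> L"
  shows "dd x q \<le> dd y q + 1" "dd y q \<le> dd x q + 1"
  using cover_meet[OF cv q] cover_rk[OF cv] unfolding dd_def by auto

lemma adj_dd: "adj L x y \<Longrightarrow> q \<in> L \<Longrightarrow> dd x q \<le> dd y q + 1"
  unfolding adj_def using cover_dd by blast

lemma path_lb: "cpath L xs a b \<Longrightarrow> dd a b \<le> int (length xs) - 1"
proof (induction xs arbitrary: a)
  case Nil then show ?case by (simp add: cpath_def)
next
  case (Cons x ys)
  have bL: "b \<in> L" using Cons.prems unfolding cpath_def by (metis last_in_set subsetD)
  show ?case
  proof (cases "ys = []")
    case True
    then have "a = b" using Cons.prems by (auto simp: cpath_def)
    then show ?thesis using dd_self bL by simp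
  next
    case False
    have c: "cpath L ys (hd ys) b" using Cons.prems False unfolding cpath_alt
      by (auto simp: successively_Cons)
    have "adj L a (hd ys)" using Cons.prems False unfolding cpath_alt by (auto simp: successively_Cons)
    then have "dd a b \<le> dd (hd ys) b + 1" using adj_dd bL by auto
    then show ?thesis using Cons.IH[OF c] by simp
  qed
qed

lemma up_path:
  "x \<in> L \<Longrightarrow> y \<in> L \<Longrightarrow> x \<le> y \<Longrightarrow> \<exists>xs. cpath L xs x y \<and> length xs = rk L y - rk L x + 1"
proof (induction "rk L y - rk L x" arbitrary: x)
  case 0
  then have "rk L y = rk L x" using rk_mono by (metis diff_is_0_eq le_antisym)
  then have "x = y" using rk_eq 0 by auto
  then show ?case using 0 by (intro exI[of _ "[x]"]) (auto simp: cpath_def)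
next
  case (Suc k)
  then have "x \<noteq> y" by auto
  then have xy: "x < y" using Suc by auto
  obtain z where z: "z \<in> L \<and> x < z \<and> z \<le> y" "\<forall>w. w \<in> L \<and> x < w \<and> w \<le> y \<longrightarrow> rk L z \<le> rk L w"
    using ex_has_least_nat[of "\<lambda>z. z \<in> L \<and> x < z \<and> z \<le> y" y "rk L"] Suc xy by blast
  have cv: "covers L x z" unfolding covers_def
  proof (intro conjI notI)
    show "x \<in> L" "z \<in> L" "x < z" using z Suc by auto
    assume "\<exists>w\<in>L. x < w \<and> w < z"
    then obtain w where "w \<in> L" "x < w" "w < z" by auto
    then show False using z rk_strict[of w z] by force
  qed
  have rz: "rk L z = Suc (rk L x)" using cover_rk[OF cv] .
  have kz: "k = rk L y - rk L z" using Suc.hyps(2) rz by simp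
  obtain zs where zs: "cpath L zs z y" "length zs = rk L y - rk L z + 1"
    using Suc.hyps(1)[OF kz] Suc.prems z by blast
  have "cpath L (x # zs) x y" using zs(1) cv Suc.prems unfolding cpath_alt adj_def
    by (auto simp: successively_Cons)
  moreover have "length (x # zs) = rk L y - rk L x + 1" using zs(2) rz Suc.hyps(2) by simp
  ultimately show ?case by blast
qed

lemma dist_path:
  assumes "x \<in> L" "y \<in> L"
  shows "\<exists>xs. cpath L xs x y \<and> int (length xs) = dd x y + 1"
proof -
  define m where "m = meet L x y"
  have m: "m \<in> L" "m \<le> x" "m \<le> y" using meet_in meet_le1 meet_le2 assms m_def by auto
  obtain xs where xs: "cpath L xs m x" "length xs = rk L x - rk L m + 1" using up_path m assms by blast
  obtain ys where ys: "cpath L ys m y" "length ys = rk L y - rk L m + 1" using up_path m assms by blast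
  have "cpath L (rev xs @ tl ys) x y" using cpath_append[OF cpath_rev[OF xs(1)] ys(1)] .
  moreover have "rk L m \<le> rk L x" "rk L m \<le> rk L y" using rk_mono m assms by auto
  ultimately show ?thesis using xs(2) ys(2) unfolding dd_def m_def
    by (intro exI[of _ "rev xs @ tl ys"]) auto
qed

lemma shortest_iff:
  assumes "x \<in> L" "y \<in> L"
  shows "shortest_cpath L xs x y \<longleftrightarrow> cpath L xs x y \<and> int (length xs) = dd x y + 1"
proof -
  obtain zs where zs: "cpath L zs x y" "int (length zs) = dd x y + 1" using dist_path assms by blast
  show ?thesis unfolding shortest_cpath_def using path_lb zs by fastforce
qed

lemma Ipq_sub:
  assumes pq: "p \<in> L" "q \<in> L" and u: "u \<in> Ipq L p q"
  shows "u \<in> L" "dd p u + dd u q \<le> dd p q"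
proof -
  obtain xs where xs: "shortest_cpath L xs p q" "u \<in> set xs" using u unfolding Ipq_def by auto
  have c: "cpath L xs p q" and len: "int (length xs) = dd p q + 1" using xs shortest_iff pq by auto
  show "u \<in> L" using c xs(2) unfolding cpath_def by auto
  obtain i where i: "i < length xs" "xs ! i = u" using xs(2) by (metis in_set_conv_nth)
  have sp: "xs = take (Suc i) xs @ drop (Suc i) xs" by simp
  have s: "successively (adj L) xs" using c cpath_alt by blast
  have "successively (adj L) (take (Suc i) xs @ drop (Suc i) xs)" using s by simp
  then have s1: "successively (adj L) (take (Suc i) xs)" using successively_append_iff by blast
  have "successively (adj L) (take i xs @ drop i xs)" using s by simp
  then have s2: "successively (adj L) (drop i xs)" using successively_append_iff by blast
  have tk: "take (Suc i) xs = take i xs @ [xs ! i]" using i(1) by (rule take_Suc_conv_app_nth)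
  have c1: "cpath L (take (Suc i) xs) p u"
    unfolding cpath_alt
  proof (intro conjI)
    show "take (Suc i) xs \<noteq> []" using tk by simp
    show "hd (take (Suc i) xs) = p" using c i unfolding cpath_def by (cases xs) auto
    show "last (take (Suc i) xs) = u" using tk i by simp
    show "set (take (Suc i) xs) \<subseteq> L" using c unfolding cpath_def by (meson set_take_subset subset_trans)
    show "successively (adj L) (take (Suc i) xs)" by (rule s1)
  qed
  have c2: "cpath L (drop i xs) u q"
    unfolding cpath_alt
  proof (intro conjI)
    show "drop i xs \<noteq> []" using i by simp
    show "hd (drop i xs) = u" using i by (simp add: hd_drop_conv_nth)
    show "last (drop i xs) = q" using c i unfolding cpath_def by simp
    show "set (drop i xs) \<subseteq> L" using c unfolding cpath_def by (meson set_drop_subset subset_trans)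
    show "successively (adj L) (drop i xs)" by (rule s2)
  qed
  have "dd p u \<le> int (Suc i) - 1" using path_lb[OF c1] i by simp
  moreover have "dd u q \<le> int (length xs - i) - 1" using path_lb[OF c2] by simp
  ultimately show "dd p u + dd u q \<le> dd p q" using len i by simp
qed

lemma Ipq_I:
  assumes pq: "p \<in> L" "q \<in> L" and u: "u \<in> L" "dd p u + dd u q = dd p q"
  shows "u \<in> Ipq L p q"
proof -
  obtain xs where xs: "cpath L xs p u" "int (length xs) = dd p u + 1" using dist_path pq u by blast
  obtain ys where ys: "cpath L ys u q" "int (length ys) = dd u q + 1" using dist_path pq u by blast
  have c: "cpath L (xs @ tl ys) p q" using cpath_append[OF xs(1) ys(1)] .
  have "length ys \<ge> 1" using ys unfolding cpath_def by (cases ys) auto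
  then have "int (length (xs @ tl ys)) = dd p q + 1" using xs(2) ys(2) u(2) by (simp add: of_nat_diff)
  then have "shortest_cpath L (xs @ tl ys) p q" using shortest_iff pq c by auto
  moreover have "u \<in> set (xs @ tl ys)" using xs(1) unfolding cpath_def by (metis Un_iff last_in_set set_append)
  ultimately show ?thesis unfolding Ipq_def by blast
qed

end




definition qcone :: "real \<Rightarrow> real \<Rightarrow> (real \<times> real) set" where
  "qcone \<alpha> \<beta> = {(x, y). 0 \<le> x \<and> 0 \<le> y \<and> y * cos \<alpha> \<le> x * sin \<alpha> \<and> y * cos \<beta> \<ge> x * sin \<beta>}"

lemma qcone_angle:
  assumes "0 \<le> \<beta>" "\<beta> \<le> \<alpha>" "\<alpha> \<le> pi/2" "0 \<le> \<theta>" "\<theta> \<le> pi/2"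
  shows "(cos \<theta>, sin \<theta>) \<in> qcone \<alpha> \<beta> \<longleftrightarrow> \<beta> \<le> \<theta> \<and> \<theta> \<le> \<alpha>"
proof -
  have c: "0 \<le> cos \<theta>" "0 \<le> sin \<theta>" using assms by (auto intro: cos_ge_zero sin_ge_zero)
  have e1: "sin \<theta> * cos \<alpha> \<le> cos \<theta> * sin \<alpha> \<longleftrightarrow> sin (\<theta> - \<alpha>) \<le> 0"
    by (simp add: sin_diff mult.commute)
  have e2: "sin \<theta> * cos \<beta> \<ge> cos \<theta> * sin \<beta> \<longleftrightarrow> sin (\<theta> - \<beta>) \<ge> 0"
    by (simp add: sin_diff mult.commute)
  have m1: "sin (\<theta> - \<alpha>) \<le> 0 \<longleftrightarrow> \<theta> - \<alpha> \<le> 0"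
  proof
    assume "sin (\<theta> - \<alpha>) \<le> 0"
    then show "\<theta> - \<alpha> \<le> 0" using sin_gt_zero[of "\<theta> - \<alpha>"] assms by fastforce
  next
    assume "\<theta> - \<alpha> \<le> 0"
    then show "sin (\<theta> - \<alpha>) \<le> 0" using sin_monotone_2pi_le[of "\<theta> - \<alpha>" 0] assms by auto
  qed
  have m2: "sin (\<theta> - \<beta>) \<ge> 0 \<longleftrightarrow> \<theta> - \<beta> \<ge> 0"
  proof
    assume "sin (\<theta> - \<beta>) \<ge> 0"
    show "\<theta> - \<beta> \<ge> 0"
    proof (rule ccontr)
      assume "\<not> \<theta> - \<beta> \<ge> 0"
      then have "0 < sin (\<beta> - \<theta>)" using sin_gt_zero[of "\<beta> - \<theta>"] assms by auto
      moreover have "sin (\<theta> - \<beta>) = - sin (\<beta> - \<theta>)" by (metis minus_diff_eq sin_minus)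
      ultimately show False using \<open>sin (\<theta> - \<beta>) \<ge> 0\<close> by linarith
    qed
  next
    assume "\<theta> - \<beta> \<ge> 0"
    then show "sin (\<theta> - \<beta>) \<ge> 0" using sin_ge_zero[of "\<theta> - \<beta>"] assms by auto
  qed
  show ?thesis unfolding qcone_def using c e1 e2 m1 m2 by auto
qed

lemma qcone_inj:
  assumes "0 \<le> \<beta>" "\<beta> \<le> \<alpha>" "\<alpha> \<le> pi/2" "0 \<le> \<beta>'" "\<beta>' \<le> \<alpha>'" "\<alpha>' \<le> pi/2"
    and eq: "qcone \<alpha> \<beta> = qcone \<alpha>' \<beta>'"
  shows "\<alpha> = \<alpha>' \<and> \<beta> = \<beta>'"
proof -
  have "\<beta>' \<le> \<alpha> \<and> \<alpha> \<le> \<alpha>'" using qcone_angle[of \<beta> \<alpha> \<alpha>] qcone_angle[of \<beta>' \<alpha>' \<alpha>] assms by auto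
  moreover have "\<beta> \<le> \<alpha>' \<and> \<alpha>' \<le> \<alpha>" using qcone_angle[of \<beta> \<alpha> \<alpha>'] qcone_angle[of \<beta>' \<alpha>' \<alpha>'] assms by auto
  moreover have "\<beta>' \<le> \<beta>" using qcone_angle[of \<beta> \<alpha> \<beta>] qcone_angle[of \<beta>' \<alpha>' \<beta>] assms by auto
  moreover have "\<beta> \<le> \<beta>'" using qcone_angle[of \<beta> \<alpha> \<beta>'] qcone_angle[of \<beta>' \<alpha>' \<beta>'] assms by auto
  ultimately show ?thesis by auto
qed

lemma cone_weight_qcone:
  assumes "0 \<le> \<beta>" "\<beta> \<le> \<alpha>" "\<alpha> \<le> pi/2"
  shows "cone_weight (qcone \<alpha> \<beta>) = sin \<alpha> / (sin \<alpha> + cos \<alpha>) - sin \<beta> / (sin \<beta> + cos \<beta>)"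
  unfolding cone_weight_def
proof (rule the_equality)
  show "\<exists>\<alpha>' \<beta>'. 0 \<le> \<beta>' \<and> \<beta>' \<le> \<alpha>' \<and> \<alpha>' \<le> pi / 2 \<and>
      qcone \<alpha> \<beta> = {(x, y). 0 \<le> x \<and> 0 \<le> y \<and> y * cos \<alpha>' \<le> x * sin \<alpha>' \<and> y * cos \<beta>' \<ge> x * sin \<beta>'} \<and>
      sin \<alpha> / (sin \<alpha> + cos \<alpha>) - sin \<beta> / (sin \<beta> + cos \<beta>) = sin \<alpha>' / (sin \<alpha>' + cos \<alpha>') - sin \<beta>' / (sin \<beta>' + cos \<beta>')"
    using assms by (intro exI[of _ \<alpha>] exI[of _ \<beta>]) (simp add: qcone_def)
  fix c assume "\<exists>\<alpha>' \<beta>'. 0 \<le> \<beta>' \<and> \<beta>' \<le> \<alpha>' \<and> \<alpha>' \<le> pi / 2 \<and>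
      qcone \<alpha> \<beta> = {(x, y). 0 \<le> x \<and> 0 \<le> y \<and> y * cos \<alpha>' \<le> x * sin \<alpha>' \<and> y * cos \<beta>' \<ge> x * sin \<beta>'} \<and>
      c = sin \<alpha>' / (sin \<alpha>' + cos \<alpha>') - sin \<beta>' / (sin \<beta>' + cos \<beta>')"
  then obtain \<alpha>' \<beta>' where ab: "0 \<le> \<beta>'" "\<beta>' \<le> \<alpha>'" "\<alpha>' \<le> pi / 2" "qcone \<alpha> \<beta> = qcone \<alpha>' \<beta>'"
     "c = sin \<alpha>' / (sin \<alpha>' + cos \<alpha>') - sin \<beta>' / (sin \<beta>' + cos \<beta>')"
    unfolding qcone_def by blast
  then show "c = sin \<alpha> / (sin \<alpha> + cos \<alpha>) - sin \<beta> / (sin \<beta> + cos \<beta>)"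
    using qcone_inj[OF assms ab(1-4)] by simp
qed

lemma qcone_full: "qcone (pi/2) 0 = {w. 0 \<le> fst w \<and> 0 \<le> snd w}"
  by (auto simp: qcone_def)
lemma qcone_low: "qcone (pi/4) 0 = {w. 0 \<le> fst w \<and> 0 \<le> snd w \<and> snd w \<le> fst w}"
  by (auto simp: qcone_def sin_45 cos_45)
lemma qcone_high: "qcone (pi/2) (pi/4) = {w. 0 \<le> fst w \<and> 0 \<le> snd w \<and> fst w \<le> snd w}"
  by (auto simp: qcone_def sin_45 cos_45)

lemma cw_full: "cone_weight {w. 0 \<le> fst w \<and> 0 \<le> snd w} = 1"
  using cone_weight_qcone[of 0 "pi/2"] qcone_full by simp
lemma cw_low: "cone_weight {w. 0 \<le> fst w \<and> 0 \<le> snd w \<and> snd w \<le> fst w} = 1/2"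
proof -
  have "cone_weight (qcone (pi/4) 0) = 1/2"
    using cone_weight_qcone[of 0 "pi/4"] by (simp add: sin_45 cos_45)
  then show ?thesis using qcone_low by simp
qed
lemma cw_high: "cone_weight {w. 0 \<le> fst w \<and> 0 \<le> snd w \<and> fst w \<le> snd w} = 1/2"
proof -
  have "cone_weight (qcone (pi/2) (pi/4)) = 1/2"
    using cone_weight_qcone[of "pi/4" "pi/2"] by (simp add: sin_45 cos_45)
  then show ?thesis using qcone_high by simp
qed


lemma inner_pp: "(w::real\<times>real) \<bullet> z = fst w * fst z + snd w * snd z"
  by (cases w, cases z) simp

lemma ext_by_functional:
  fixes x :: "real \<times> real" and S :: "(real \<times> real) set" and c1 c2 :: real
  assumes xS: "x \<in> S" and le: "\<forall>z\<in>S. c1 * fst z + c2 * snd z \<le> c1 * fst x + c2 * snd x"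
    and eq: "\<forall>z\<in>S. c1 * fst z + c2 * snd z = c1 * fst x + c2 * snd x \<longrightarrow> z = x"
  shows "x extreme_point_of S"
  unfolding extreme_point_of_def
proof (intro conjI ballI notI)
  show "x \<in> S" by fact
  fix a b assume ab: "a \<in> S" "b \<in> S" "x \<in> open_segment a b"
  then obtain u where u: "0 \<le> u" "u \<le> 1" "x = (1-u) *\<^sub>R a + u *\<^sub>R b" and xne: "x \<noteq> a" "x \<noteq> b"
    unfolding open_segment_def closed_segment_def by auto
  define f where "f = (\<lambda>z::real\<times>real. c1 * fst z + c2 * snd z)"
  have fx: "f x = (1-u) * f a + u * f b" unfolding u(3) f_def by (simp add: algebra_simps)
  have fa: "f a \<le> f x" and fb: "f b \<le> f x" using le ab unfolding f_def by auto
  have "u \<noteq> 1" using u xne by auto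
  then have u1: "0 < 1 - u" using u by auto
  have "f a = f x"
  proof (rule ccontr)
    assume "f a \<noteq> f x"
    then have "f a < f x" using fa by auto
    then have "(1-u) * f a < (1-u) * f x" using u1 by simp
    moreover have "u * f b \<le> u * f x" using fb u(1) by (simp add: mult_left_mono)
    ultimately have "f x < (1-u) * f x + u * f x" using fx by linarith
    then show False by (simp add: algebra_simps)
  qed
  then have "a = x" using eq ab unfolding f_def by auto
  then show False using xne by auto
qed

lemma seg_point:
  fixes A B S t :: real
  assumes "S - B \<le> t" "t \<le> A"
  shows "\<exists>u. 0 \<le> u \<and> u \<le> 1 \<and> (t, S - t) = (1 - u) *\<^sub>R (S - B, B) + u *\<^sub>R (A, S - A)
     \<and> (S - B < t \<longrightarrow> 0 < u) \<and> (t < A \<longrightarrow> u < 1)"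
proof (cases "A = S - B")
  case True
  then have "t = A" using assms by auto
  then show ?thesis using True by (intro exI[of _ 0]) auto
next
  case False
  then have d: "A - (S - B) > 0" using assms by auto
  define u where "u = (t - (S - B)) / (A - (S - B))"
  have "0 \<le> u" "u \<le> 1" using assms d by (auto simp: u_def field_simps)
  moreover have "(t, S - t) = (1 - u) *\<^sub>R (S - B, B) + u *\<^sub>R (A, S - A)"
  proof -
    have m: "u * (A - (S - B)) = t - (S - B)" using d unfolding u_def by simp
    have "(1-u)*(S-B) + u*A = (S-B) + u*(A-(S-B))" by (simp add: algebra_simps)
    then have e1: "(1-u)*(S-B) + u*A = t" using m by linarith
    then have e2: "(1-u)*B + u*(S-A) = S - t" by (simp add: algebra_simps)
    show ?thesis using e1 e2 by (simp add: prod_eq_iff)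
  qed
  moreover have "S - B < t \<longrightarrow> 0 < u" using d by (auto simp: u_def field_simps)
  moreover have "t < A \<longrightarrow> u < 1" using d by (auto simp: u_def field_simps)
  ultimately show ?thesis by blast
qed

locale geo =
  fixes X :: "(real \<times> real) set" and A B S :: real
  assumes lpX: "(A, S - A) \<in> X" and rpX: "(S - B, B) \<in> X"
    and bnd: "\<forall>z\<in>X. fst z \<le> A \<and> snd z \<le> B \<and> fst z + snd z \<le> S"
    and SAB: "S \<le> A + B"
begin

definition "R = {z::real\<times>real. (1,0) \<bullet> z \<le> A} \<inter> {z. (0,1) \<bullet> z \<le> B} \<inter> {z. (1,1) \<bullet> z \<le> S}"

lemma R_alt: "z \<in> R \<longleftrightarrow> fst z \<le> A \<and> snd z \<le> B \<and> fst z + snd z \<le> S"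
  unfolding R_def by (cases z) auto

lemma H_bnd: assumes "z \<in> (convex hull X)" shows "fst z \<le> A \<and> snd z \<le> B \<and> fst z + snd z \<le> S"
proof -
  have "convex R" unfolding R_def by (intro convex_Int convex_halfspace_le)
  moreover have "X \<subseteq> R" using bnd R_alt by auto
  ultimately have "(convex hull X) \<subseteq> R" by (rule hull_minimal[rotated])
  then have "z \<in> R" using assms by blast
  then show ?thesis using R_alt by simp
qed

lemma lp_H: "(A, S - A) \<in> (convex hull X)" by (rule hull_inc[OF lpX])
lemma rp_H: "(S - B, B) \<in> (convex hull X)" by (rule hull_inc[OF rpX])

lemma lp_ext: "(A, S - A) extreme_point_of (convex hull X)"
proof (rule ext_by_functional[of "(A, S - A)" "convex hull X" 2 1])
  show "(A, S - A) \<in> convex hull X" by (rule lp_H)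
  show "\<forall>z\<in>convex hull X. 2 * fst z + 1 * snd z \<le> 2 * fst (A, S - A) + 1 * snd (A, S - A)"
  proof
    fix z assume "z \<in> convex hull X"
    from H_bnd[OF this] show "2 * fst z + 1 * snd z \<le> 2 * fst (A, S - A) + 1 * snd (A, S - A)" by simp
  qed
  show "\<forall>z\<in>convex hull X. 2 * fst z + 1 * snd z = 2 * fst (A, S - A) + 1 * snd (A, S - A) \<longrightarrow> z = (A, S - A)"
  proof (intro ballI impI)
    fix z assume "z \<in> convex hull X" "2 * fst z + 1 * snd z = 2 * fst (A, S - A) + 1 * snd (A, S - A)"
    with H_bnd[OF this(1)] have "fst z = A" "snd z = S - A" by auto
    then show "z = (A, S - A)" by (simp add: prod_eq_iff)
  qed
qed

lemma rp_ext: "(S - B, B) extreme_point_of (convex hull X)"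
proof (rule ext_by_functional[of "(S - B, B)" "convex hull X" 1 2])
  show "(S - B, B) \<in> convex hull X" by (rule rp_H)
  show "\<forall>z\<in>convex hull X. 1 * fst z + 2 * snd z \<le> 1 * fst (S - B, B) + 2 * snd (S - B, B)"
  proof
    fix z assume "z \<in> convex hull X"
    from H_bnd[OF this] show "1 * fst z + 2 * snd z \<le> 1 * fst (S - B, B) + 2 * snd (S - B, B)" by simp
  qed
  show "\<forall>z\<in>convex hull X. 1 * fst z + 2 * snd z = 1 * fst (S - B, B) + 2 * snd (S - B, B) \<longrightarrow> z = (S - B, B)"
  proof (intro ballI impI)
    fix z assume "z \<in> convex hull X" "1 * fst z + 2 * snd z = 1 * fst (S - B, B) + 2 * snd (S - B, B)"
    with H_bnd[OF this(1)] have "fst z = S - B" "snd z = B" by auto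
    then show "z = (S - B, B)" by (simp add: prod_eq_iff)
  qed
qed

lemma lp_par: "\<forall>z\<in>(convex hull X). A \<le> fst z \<and> S - A \<le> snd z \<longrightarrow> z = (A, S - A)"
proof (intro ballI impI)
  fix z assume "z \<in> convex hull X" "A \<le> fst z \<and> S - A \<le> snd z"
  with H_bnd[OF this(1)] have "fst z = A" "snd z = S - A" by auto
  then show "z = (A, S - A)" by (simp add: prod_eq_iff)
qed

lemma rp_par: "\<forall>z\<in>(convex hull X). S - B \<le> fst z \<and> B \<le> snd z \<longrightarrow> z = (S - B, B)"
proof (intro ballI impI)
  fix z assume "z \<in> convex hull X" "S - B \<le> fst z \<and> B \<le> snd z"
  with H_bnd[OF this(1)] have "fst z = S - B" "snd z = B" by auto
  then show "z = (S - B, B)" by (simp add: prod_eq_iff)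
qed

lemma seg_H: assumes "S - B \<le> t" "t \<le> A" shows "(t, S - t) \<in> (convex hull X)"
proof -
  obtain u where u: "0 \<le> u" "u \<le> 1" "(t, S - t) = (1 - u) *\<^sub>R (S - B, B) + u *\<^sub>R (A, S - A)"
    using seg_point[OF assms] by blast
  have "convex (convex hull X)" by (rule convex_convex_hull)
  then have "(1 - u) *\<^sub>R (S - B, B) + u *\<^sub>R (A, S - A) \<in> convex hull X"
    using rp_H lp_H u(1,2) unfolding convex_alt by blast
  then show ?thesis by (simp only: u(3))
qed

lemma only:
  assumes zH: "z extreme_point_of (convex hull X)"
    and par: "\<forall>w\<in>(convex hull X). fst z \<le> fst w \<and> snd z \<le> snd w \<longrightarrow> w = z"
  shows "z = (A, S - A) \<or> z = (S - B, B)"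
proof -
  have zin: "z \<in> (convex hull X)" using zH extreme_point_of_def by blast
  obtain x y where z: "z = (x, y)" by (cases z)
  have b: "x \<le> A" "y \<le> B" "x + y \<le> S" using H_bnd[OF zin] z by auto
  show ?thesis
  proof (cases "x + y < S")
    case True
    define t where "t = max x (S - B)"
    have t: "S - B \<le> t" "t \<le> A" using b SAB by (auto simp: t_def)
    have "(t, S - t) \<in> (convex hull X)" using seg_H t by auto
    moreover have "x \<le> t" "y \<le> S - t" using True b by (auto simp: t_def)
    ultimately have "(t, S - t) = z" using par z by auto
    then show ?thesis using True z by auto
  next
    case False
    then have y: "y = S - x" using b by auto
    have x1: "S - B \<le> x" using b y by auto
    show ?thesis
    proof (cases "x = A \<or> x = S - B")
      case True then show ?thesis using z y by auto
    next
      case False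
      then have "S - B < x" "x < A" using x1 b by auto
      then obtain u where u: "0 < u" "u < 1" "(x, S - x) = (1 - u) *\<^sub>R (S - B, B) + u *\<^sub>R (A, S - A)"
        using seg_point[of S B x A] by auto
      have "z \<in> closed_segment (S - B, B) (A, S - A)"
        unfolding closed_segment_def using u z y by auto
      moreover have "z \<noteq> (S - B, B)" "z \<noteq> (A, S - A)" using False z by auto
      ultimately have "z \<in> open_segment (S - B, B) (A, S - A)" unfolding open_segment_def by auto
      then show ?thesis using zH rp_H lp_H unfolding extreme_point_of_def by blast
    qed
  qed
qed

lemma bdd: "0 \<le> fst w \<Longrightarrow> 0 \<le> snd w \<Longrightarrow> bdd_above ((\<lambda>z. w \<bullet> z) ` (convex hull X))"
proof (rule bdd_aboveI2)
  fix z assume "0 \<le> fst w" "0 \<le> snd w" "z \<in> (convex hull X)"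
  then have hb: "fst z \<le> A" "snd z \<le> B" using H_bnd by auto
  have "fst w * fst z \<le> fst w * A" "snd w * snd z \<le> snd w * B"
    using mult_left_mono[OF hb(1) \<open>0 \<le> fst w\<close>] mult_left_mono[OF hb(2) \<open>0 \<le> snd w\<close>] by auto
  then show "w \<bullet> z \<le> fst w * A + snd w * B" unfolding inner_pp by linarith
qed

lemma sup_char:
  assumes "0 \<le> fst w" "0 \<le> snd w" "p \<in> (convex hull X)"
  shows "w \<bullet> p = (SUP z\<in>(convex hull X). w \<bullet> z) \<longleftrightarrow> (\<forall>z\<in>(convex hull X). w \<bullet> z \<le> w \<bullet> p)"
proof
  assume "w \<bullet> p = (SUP z\<in>(convex hull X). w \<bullet> z)"
  then show "\<forall>z\<in>(convex hull X). w \<bullet> z \<le> w \<bullet> p" using cSUP_upper[OF _ bdd[OF assms(1,2)]] by auto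
next
  assume "\<forall>z\<in>(convex hull X). w \<bullet> z \<le> w \<bullet> p"
  then show "w \<bullet> p = (SUP z\<in>(convex hull X). w \<bullet> z)"
    using assms(3) by (intro cSup_eq_maximum[symmetric]) auto
qed

definition "coneH p = {w. 0 \<le> fst w \<and> 0 \<le> snd w \<and> w \<bullet> p = (SUP z\<in>(convex hull X). w \<bullet> z)}"

lemma cone_deg:
  assumes "A = S - B"
  shows "coneH (A, S - A) = {w. 0 \<le> fst w \<and> 0 \<le> snd w}"
proof -
  have "w \<bullet> z \<le> w \<bullet> (A, S - A)" if "0 \<le> fst w" "0 \<le> snd w" "z \<in> (convex hull X)" for w z
  proof -
    have hb: "fst z \<le> A" "snd z \<le> B" using H_bnd[OF that(3)] by auto
    have "fst w * fst z \<le> fst w * A" "snd w * snd z \<le> snd w * B"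
      using mult_left_mono[OF hb(1) that(1)] mult_left_mono[OF hb(2) that(2)] by auto
    then show ?thesis unfolding inner_pp using assms by simp
  qed
  note key = this
  show ?thesis
  proof (rule set_eqI)
    fix w
    show "w \<in> coneH (A, S - A) \<longleftrightarrow> w \<in> {w. 0 \<le> fst w \<and> 0 \<le> snd w}"
    proof (cases "0 \<le> fst w \<and> 0 \<le> snd w")
      case True
      then show ?thesis unfolding coneH_def using sup_char[of w "(A, S - A)"] lp_H key[of w] by simp
    next
      case False
      then show ?thesis unfolding coneH_def by auto
    qed
  qed
qed

lemma cone_lp:
  assumes "A \<noteq> S - B"
  shows "coneH (A, S - A) = {w. 0 \<le> fst w \<and> 0 \<le> snd w \<and> snd w \<le> fst w}"
proof -
  have D: "A + B - S > 0" using assms SAB by auto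
  have "(\<forall>z\<in>(convex hull X). w \<bullet> z \<le> w \<bullet> (A, S - A)) \<longleftrightarrow> snd w \<le> fst w"
    if w: "0 \<le> fst w" "0 \<le> snd w" for w
  proof
    assume "\<forall>z\<in>(convex hull X). w \<bullet> z \<le> w \<bullet> (A, S - A)"
    then have "w \<bullet> (S - B, B) \<le> w \<bullet> (A, S - A)" using rp_H by auto
    then have "snd w * (A + B - S) \<le> fst w * (A + B - S)" unfolding inner_pp by (simp add: algebra_simps)
    then show "snd w \<le> fst w" using D by simp
  next
    assume h: "snd w \<le> fst w"
    show "\<forall>z\<in>(convex hull X). w \<bullet> z \<le> w \<bullet> (A, S - A)"
    proof
      fix z assume "z \<in> (convex hull X)"
      then have b: "fst z \<le> A" "fst z + snd z \<le> S" using H_bnd by auto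
      have "(fst w - snd w) * fst z \<le> (fst w - snd w) * A" using h b by (auto intro: mult_left_mono)
      moreover have "snd w * (fst z + snd z) \<le> snd w * S" using w b by (auto intro: mult_left_mono)
      ultimately show "w \<bullet> z \<le> w \<bullet> (A, S - A)" unfolding inner_pp by (simp add: algebra_simps)
    qed
  qed
  note key = this
  show ?thesis
  proof (rule set_eqI)
    fix w
    show "w \<in> coneH (A, S - A) \<longleftrightarrow> w \<in> {w. 0 \<le> fst w \<and> 0 \<le> snd w \<and> snd w \<le> fst w}"
    proof (cases "0 \<le> fst w \<and> 0 \<le> snd w")
      case True
      then show ?thesis unfolding coneH_def using sup_char[of w "(A, S - A)"] lp_H key[of w] by simp
    next
      case False
      then show ?thesis unfolding coneH_def by auto
    qed
  qed
qed

lemma cone_rp: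
  assumes "A \<noteq> S - B"
  shows "coneH (S - B, B) = {w. 0 \<le> fst w \<and> 0 \<le> snd w \<and> fst w \<le> snd w}"
proof -
  have D: "A + B - S > 0" using assms SAB by auto
  have "(\<forall>z\<in>(convex hull X). w \<bullet> z \<le> w \<bullet> (S - B, B)) \<longleftrightarrow> fst w \<le> snd w"
    if w: "0 \<le> fst w" "0 \<le> snd w" for w
  proof
    assume "\<forall>z\<in>(convex hull X). w \<bullet> z \<le> w \<bullet> (S - B, B)"
    then have "w \<bullet> (A, S - A) \<le> w \<bullet> (S - B, B)" using lp_H by auto
    then have "fst w * (A + B - S) \<le> snd w * (A + B - S)" unfolding inner_pp by (simp add: algebra_simps)
    then show "fst w \<le> snd w" using D by simp
  next
    assume h: "fst w \<le> snd w"
    show "\<forall>z\<in>(convex hull X). w \<bullet> z \<le> w \<bullet> (S - B, B)"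
    proof
      fix z assume "z \<in> (convex hull X)"
      then have b: "snd z \<le> B" "fst z + snd z \<le> S" using H_bnd by auto
      have "(snd w - fst w) * snd z \<le> (snd w - fst w) * B" using h b by (auto intro: mult_left_mono)
      moreover have "fst w * (fst z + snd z) \<le> fst w * S" using w b by (auto intro: mult_left_mono)
      ultimately show "w \<bullet> z \<le> w \<bullet> (S - B, B)" unfolding inner_pp by (simp add: algebra_simps)
    qed
  qed
  note key = this
  show ?thesis
  proof (rule set_eqI)
    fix w
    show "w \<in> coneH (S - B, B) \<longleftrightarrow> w \<in> {w. 0 \<le> fst w \<and> 0 \<le> snd w \<and> fst w \<le> snd w}"
    proof (cases "0 \<le> fst w \<and> 0 \<le> snd w")
      case True
      then show ?thesis unfolding coneH_def using sup_char[of w "(S - B, B)"] rp_H key[of w] by simp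
    next
      case False
      then show ?thesis unfolding coneH_def by auto
    qed
  qed
qed

end




context pspace
begin

definition LS :: "'a \<Rightarrow> 'a \<Rightarrow> 'a set" where
  "LS p q = {v \<in> L. meet L p q \<le> v \<and> v \<le> q \<and> has_join L p v}"

lemma chain2: "x \<in> L \<Longrightarrow> y \<in> L \<Longrightarrow> x \<le> y \<Longrightarrow> is_chain L {x, y}"
  by (rule chainI) auto
lemma chain3: "x \<in> L \<Longrightarrow> y \<in> L \<Longrightarrow> z \<in> L \<Longrightarrow> x \<le> y \<Longrightarrow> y \<le> z \<Longrightarrow> is_chain L {x, y, z}"
  by (rule chainI) (auto intro: order_trans)

lemma join_frame_eq:
  assumes F: "F \<in> Frames" and xy: "x \<in> F" "y \<in> F" and h: "has_join L x y"
  shows "crd F (join L x y) = vjoin (crd F x) (crd F y)" "join L x y \<in> F"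
proof -
  have c: "vcompat (crd F x) (crd F y)"
    using frame_compat[OF F xy join_in[OF h] join_ge1[OF h] join_ge2[OF h]] .
  let ?v = "vjoin (crd F x) (crd F y)"
  have vS: "?v \<in> S2n n" using vjoin_S2n crd_in F xy by auto
  have j: "join L x y = ic F ?v" using join_eq frame_join[OF F xy c] by blast
  show "crd F (join L x y) = ?v" using j crd_ic[OF F vS] by simp
  show "join L x y \<in> F" using j ic_in[OF F vS] by simp
qed

lemma LS_join:
  assumes pq: "p \<in> L" "q \<in> L" and v1: "v1 \<in> LS p q" and v2: "v2 \<in> LS p q"
  shows "has_join L v1 v2" "join L v1 v2 \<in> LS p q"
proof -
  define m where "m = meet L p q"
  have v1L: "v1 \<in> L" "m \<le> v1" "v1 \<le> q" "has_join L p v1" using v1 unfolding LS_def m_def by auto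
  have v2L: "v2 \<in> L" "m \<le> v2" "v2 \<le> q" "has_join L p v2" using v2 unfolding LS_def m_def by auto
  show hj: "has_join L v1 v2" using join_exists[OF v1L(1) v2L(1) pq(2) v1L(3) v2L(3)] .
  define w where "w = join L v1 v2"
  have w: "w \<in> L" "v1 \<le> w" "v2 \<le> w" "w \<le> q" using join_in join_ge1 join_ge2 join_lub hj pq v1L v2L w_def by auto
  have mw: "m \<le> w" using v1L w by (meson order_trans)
  define z2 where "z2 = join L p v2"
  have z2: "z2 \<in> L" "p \<le> z2" "v2 \<le> z2" using join_in join_ge1 join_ge2 v2L z2_def by auto
  obtain H where H: "H \<in> Frames" "{v1, w} \<subseteq> H" "{p, z2} \<subseteq> H"
    using P1[OF chain2[OF v1L(1) w(1) w(2)] chain2[OF pq(1) z2(1) z2(2)]] by blast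
  have v1H: "v1 \<in> H" and wH: "w \<in> H" and pH: "p \<in> H" and z2H: "z2 \<in> H" using H by auto
  define a where "a = meet L w z2"
  have aH: "a \<in> H" using frame_meet[OF H(1) wH z2H] a_def by simp
  have aL: "a \<in> L" "a \<le> w" using meet_in meet_le1 w z2 a_def by auto
  have v2a: "v2 \<le> a" using meet_glb w z2 v2L a_def by auto
  have h1a: "has_join L v1 a" using join_exists[OF v1L(1) aL(1) w(1) w(2) aL(2)] .
  have "join L v1 a = w"
  proof (rule order.antisym)
    show "join L v1 a \<le> w" using join_lub[OF h1a w(1) w(2) aL(2)] .
    have "v2 \<le> join L v1 a" using v2a join_ge2[OF h1a] by (meson order_trans)
    then show "w \<le> join L v1 a" unfolding w_def using join_lub[OF hj join_in[OF h1a] join_ge1[OF h1a]] by blast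
  qed
  then have Wc: "crd H w = vjoin (crd H v1) (crd H a)" using join_frame_eq(1)[OF H(1) v1H aH h1a] by simp
  have Ac: "crd H a = vmeet (crd H w) (crd H z2)" using frame_meet_crd[OF H(1) wH z2H] a_def by simp
  have pv1: "vcompat (crd H p) (crd H v1)"
    using frame_compat[OF H(1) pH v1H join_in[OF v1L(4)] join_ge1[OF v1L(4)] join_ge2[OF v1L(4)]] .
  have pz2: "S2n_le (crd H p) (crd H z2)" using crd_le[OF H(1) pH z2H] z2 by simp
  have v1w: "S2n_le (crd H v1) (crd H w)" using crd_le[OF H(1) v1H wH] w by simp
  have "vcompat (crd H p) (crd H w)"
    unfolding vcompat_def
  proof
    fix i
    let ?P = "crd H p" and ?W = "crd H w" and ?V = "crd H v1" and ?Z = "crd H z2" and ?A = "crd H a"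
    have e1: "?W i = (if ?V i = 0 then ?A i else ?V i)" using Wc by (simp add: vjoin_def)
    have e2: "?A i = (if ?W i = ?Z i then ?W i else 0)" using Ac by (simp add: vmeet_def)
    have e3: "?P i = 0 \<or> ?P i = ?Z i" using pz2 by (simp add: S2n_le_def S2_le_def)
    have e4: "?V i = 0 \<or> ?V i = ?W i" using v1w by (simp add: S2n_le_def S2_le_def)
    have e5: "?P i = 0 \<or> ?V i = 0 \<or> ?P i = ?V i" using pv1 by (simp add: vcompat_def)
    show "?P i = 0 \<or> ?W i = 0 \<or> ?P i = ?W i" using e1 e2 e3 e4 e5 by auto
  qed
  then have "has_join L p w" using frame_join[OF H(1) pH wH] unfolding has_join_def by blast
  then show "join L v1 v2 \<in> LS p q" unfolding LS_def using w mw m_def w_def by auto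
qed

lemma LS_m: "p \<in> L \<Longrightarrow> q \<in> L \<Longrightarrow> meet L p q \<in> LS p q"
  unfolding LS_def using meet_in meet_le1 meet_le2 join_exists[of p "meet L p q" p]
  by (auto simp: meet_in meet_le1)

lemma LS_greatest:
  assumes pq: "p \<in> L" "q \<in> L"
  shows "\<exists>g\<in>LS p q. \<forall>v\<in>LS p q. v \<le> g"
proof -
  obtain g where g: "g \<in> LS p q" "\<forall>v. v \<in> LS p q \<longrightarrow> rk L v \<le> rk L g"
    using ex_has_greatest_nat[of "\<lambda>v. v \<in> LS p q" "meet L p q" "rk L" "Suc (rk L q)"] LS_m[OF pq]
      rk_mono pq unfolding LS_def by fastforce
  have "v \<le> g" if v: "v \<in> LS p q" for v
  proof -
    have h: "has_join L v g" "join L v g \<in> LS p q" using LS_join[OF pq v g(1)] by auto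
    have gL: "g \<in> L" "v \<in> L" using g(1) v unfolding LS_def by auto
    have jL: "join L v g \<in> L" using join_in[OF h(1)] .
    have "g \<le> join L v g" using join_ge2[OF h(1)] .
    moreover have "rk L (join L v g) \<le> rk L g" using g(2) h(2) by auto
    ultimately have "join L v g = g" using rk_eq[OF gL(1) jL] rk_mono[OF gL(1) jL] by auto
    then show ?thesis using join_ge1[OF h(1)] by simp
  qed
  then show ?thesis using g(1) by blast
qed

definition lg :: "'a \<Rightarrow> 'a \<Rightarrow> 'a" where
  "lg p q = (SOME g. g \<in> LS p q \<and> (\<forall>v\<in>LS p q. v \<le> g))"

lemma lg: assumes "p \<in> L" "q \<in> L" shows "lg p q \<in> LS p q" "\<forall>v\<in>LS p q. v \<le> lg p q"
proof -
  have "lg p q \<in> LS p q \<and> (\<forall>v\<in>LS p q. v \<le> lg p q)"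
  proof -
    obtain g where "g \<in> LS p q \<and> (\<forall>v\<in>LS p q. v \<le> g)" using LS_greatest[OF assms] by blast
    then show ?thesis unfolding lg_def by (rule someI)
  qed
  then show "lg p q \<in> LS p q" "\<forall>v\<in>LS p q. v \<le> lg p q" by auto
qed

lemma left_join_lg:
  assumes pq: "p \<in> L" "q \<in> L"
  shows "left_join L p q = join L p (lg p q)"
proof -
  have "(THE u. u \<in> L \<and> meet L p q \<le> u \<and> u \<le> q \<and> has_join L p u \<and>
       (\<forall>v\<in>L. meet L p q \<le> v \<and> v \<le> q \<and> has_join L p v \<and> u \<le> v \<longrightarrow> v = u)) = lg p q"
  proof (rule the_equality)
    show "lg p q \<in> L \<and> meet L p q \<le> lg p q \<and> lg p q \<le> q \<and> has_join L p (lg p q) \<and>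
       (\<forall>v\<in>L. meet L p q \<le> v \<and> v \<le> q \<and> has_join L p v \<and> lg p q \<le> v \<longrightarrow> v = lg p q)"
      using lg[OF pq] unfolding LS_def by (auto intro: order.antisym)
    fix u assume "u \<in> L \<and> meet L p q \<le> u \<and> u \<le> q \<and> has_join L p u \<and>
       (\<forall>v\<in>L. meet L p q \<le> v \<and> v \<le> q \<and> has_join L p v \<and> u \<le> v \<longrightarrow> v = u)"
    then show "u = lg p q" using lg[OF pq] unfolding LS_def by auto
  qed
  then show ?thesis unfolding left_join_def by simp
qed


lemma Ipq_struct:
  assumes pq: "p \<in> L" "q \<in> L" and u: "u \<in> Ipq L p q"
  shows "u \<in> L" "meet L p q \<le> u" "has_join L (meet L u p) (meet L u q)"
    "join L (meet L u p) (meet L u q) = u"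
proof -
  have uL: "u \<in> L" and d: "dd p u + dd u q \<le> dd p q" using Ipq_sub[OF pq u] by auto
  show "u \<in> L" by (rule uL)
  define m where "m = meet L p q"
  define a where "a = meet L u p"
  define b where "b = meet L u q"
  have mL: "m \<in> L" "m \<le> p" "m \<le> q" using meet_in meet_le1 meet_le2 pq m_def by auto
  have aL: "a \<in> L" "a \<le> u" "a \<le> p" using meet_in meet_le1 meet_le2 pq uL a_def by auto
  have bL: "b \<in> L" "b \<le> u" "b \<le> q" using meet_in meet_le1 meet_le2 pq uL b_def by auto
  have h: "has_join L a b" using join_exists[OF aL(1) bL(1) uL aL(2) bL(2)] .
  show "has_join L (meet L u p) (meet L u q)" using h a_def b_def by simp
  define j where "j = join L a b"
  have jL: "j \<in> L" "j \<le> u" using join_in[OF h] join_lub[OF h uL aL(2) bL(2)] j_def by auto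
  define c where "c = meet L u m"
  have cL: "c \<in> L" "c \<le> u" "c \<le> m" using meet_in meet_le1 meet_le2 uL mL c_def by auto
  have ab: "meet L a b = c"
  proof (rule meet_eqI[OF aL(1) bL(1) cL(1)])
    show "c \<le> a" unfolding a_def using meet_glb[OF uL pq(1) cL(1) cL(2)] cL(3) mL(2) by (meson order_trans)
    show "c \<le> b" unfolding b_def using meet_glb[OF uL pq(2) cL(1) cL(2)] cL(3) mL(3) by (meson order_trans)
    fix w assume w: "w \<in> L" "w \<le> a" "w \<le> b"
    have "w \<le> u" "w \<le> p" "w \<le> q" using w aL bL by (meson order_trans)+
    then have "w \<le> m" using meet_glb pq w(1) m_def by auto
    then show "w \<le> c" using meet_glb uL mL(1) w(1) \<open>w \<le> u\<close> c_def by auto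
  qed
  have md: "rk L j + rk L c = rk L a + rk L b" using modular[OF aL(1) bL(1) h] ab j_def by simp
  have rc: "rk L c \<le> rk L m" using rk_mono cL mL by auto
  have rj: "rk L j \<le> rk L u" using rk_mono jL uL by auto
  have "meet L p u = a" using meet_comm pq uL a_def by auto
  then have "int (rk L u) \<le> int (rk L a) + int (rk L b) - int (rk L m)"
    using d unfolding dd_def m_def b_def by simp
  then have e1: "rk L c = rk L m" and e2: "rk L j = rk L u" using md rc rj by linarith+
  have "c = m" using rk_eq[OF cL(1) mL(1) cL(3) e1] .
  then show "meet L p q \<le> u" using cL m_def by simp
  show "join L (meet L u p) (meet L u q) = u" using rk_eq[OF jL(1) uL jL(2) e2] j_def a_def b_def by simp
qed

lemma region:
  assumes pq: "p \<in> L" "q \<in> L" and a: "a \<in> L" "meet L p q \<le> a" "a \<le> p"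
    and b: "b \<in> L" "meet L p q \<le> b" "b \<le> q" and h: "has_join L a b"
  shows "rk L a + rk L b \<le> rk L p + rk L (lg p q)"
proof -
  define m where "m = meet L p q"
  have mL: "m \<in> L" using meet_in pq m_def by auto
  obtain F where F: "F \<in> Frames" "{m, a, p} \<subseteq> F" "{m, b, q} \<subseteq> F"
    using P1[OF chain3[OF mL a(1) pq(1) a(2)[folded m_def] a(3)] chain3[OF mL b(1) pq(2) b(2)[folded m_def] b(3)]]
    by blast
  have inF: "m \<in> F" "a \<in> F" "p \<in> F" "b \<in> F" "q \<in> F" using F by auto
  define P where "P = crd F p"
  define Q where "Q = crd F q"
  define AA where "AA = crd F a"
  define BB where "BB = crd F b"
  have PS: "P \<in> S2n n" "Q \<in> S2n n" using crd_in F(1) inF P_def Q_def by auto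
  have M: "crd F m = vmeet P Q" using frame_meet_crd[OF F(1) inF(3) inF(5)] m_def P_def Q_def by simp
  define V where "V = (\<lambda>i. if P i = 0 \<or> P i = Q i then Q i else 0)"
  have VS: "V \<in> S2n n" using PS(2) by (auto simp: S2n_def V_def)
  define v where "v = ic F V"
  have vF: "v \<in> F" and cv: "crd F v = V" using ic_in crd_ic F(1) VS v_def by auto
  have vL: "v \<in> L" using vF frame_sub F(1) by auto
  have "v \<le> q" using crd_le[OF F(1) vF inF(5)] cv Q_def by (auto simp: S2n_le_def S2_le_def V_def)
  moreover have "m \<le> v" using crd_le[OF F(1) inF(1) vF] cv M by (auto simp: S2n_le_def S2_le_def V_def vmeet_def)
  moreover have "has_join L p v"
  proof -
    have "vcompat P V" by (auto simp: vcompat_def V_def)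
    then show ?thesis using frame_join[OF F(1) inF(3) vF] cv P_def unfolding has_join_def by auto
  qed
  ultimately have "v \<in> LS p q" unfolding LS_def using vL m_def by auto
  then have "v \<le> lg p q" using lg pq by auto
  moreover have "lg p q \<in> L" using lg pq unfolding LS_def by auto
  ultimately have rv: "rk L v \<le> rk L (lg p q)" using rk_mono vL by auto
  have rvV: "rk L v = supp n V" using rk_frame[OF F(1) vF] cv by simp
  have c: "vcompat AA BB"
    using frame_compat[OF F(1) inF(2) inF(4) join_in[OF h] join_ge1[OF h] join_ge2[OF h]] AA_def BB_def by simp
  have ap: "S2n_le AA P" using crd_le[OF F(1) inF(2) inF(3)] a AA_def P_def by simp
  have bq: "S2n_le BB Q" using crd_le[OF F(1) inF(4) inF(5)] b BB_def Q_def by simp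
  have "supp n AA + supp n BB \<le> supp n P + supp n V"
    unfolding supp_def sum.distrib[symmetric]
  proof (rule sum_mono)
    fix i
    have e1: "AA i = 0 \<or> AA i = P i" using ap by (simp add: S2n_le_def S2_le_def)
    have e2: "BB i = 0 \<or> BB i = Q i" using bq by (simp add: S2n_le_def S2_le_def)
    have e3: "AA i = 0 \<or> BB i = 0 \<or> AA i = BB i" using c by (simp add: vcompat_def)
    show "(if AA i = 0 then 0 else 1) + (if BB i = 0 then 0 else 1)
          \<le> (if P i = 0 then 0 else 1) + (if V i = 0 then 0 else (1::nat))"
      using e1 e2 e3 by (auto simp: V_def)
  qed
  then show ?thesis using rk_frame[OF F(1) inF(2)] rk_frame[OF F(1) inF(4)] rk_frame[OF F(1) inF(3)]
      rvV rv AA_def BB_def P_def by simp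
qed

lemma lj_facts:
  assumes pq: "p \<in> L" "q \<in> L"
  shows "left_join L p q \<in> Ipq L p q" "meet L (left_join L p q) p = p"
    "meet L (left_join L p q) q = lg p q" "lg p q \<in> L" "lg p q \<le> q" "meet L p q \<le> lg p q"
proof -
  define m where "m = meet L p q"
  define g where "g = lg p q"
  define lj where "lj = left_join L p q"
  have mL: "m \<in> L" "m \<le> p" "m \<le> q" using meet_in meet_le1 meet_le2 pq m_def by auto
  have g: "g \<in> L" "m \<le> g" "g \<le> q" "has_join L p g" using lg(1)[OF pq] unfolding LS_def g_def m_def by auto
  show "lg p q \<in> L" "lg p q \<le> q" "meet L p q \<le> lg p q" using g g_def m_def by auto
  have ljd: "lj = join L p g" using left_join_lg[OF pq] lj_def g_def by simp
  have lj: "lj \<in> L" "p \<le> lj" "g \<le> lj" using join_in join_ge1 join_ge2 g(4) ljd by auto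
  have pg: "meet L p g = m"
  proof (rule meet_eqI[OF pq(1) g(1) mL(1) mL(2) g(2)])
    fix w assume "w \<in> L" "w \<le> p" "w \<le> g"
    then show "w \<le> m" using meet_glb pq g(3) m_def by (meson order_trans)
  qed
  have md: "rk L lj + rk L m = rk L p + rk L g" using modular[OF pq(1) g(1) g(4)] pg ljd by simp
  show lp: "meet L (left_join L p q) p = p" using meet_absorb2[OF lj(1) pq(1) lj(2)] lj_def by simp
  define c where "c = meet L lj q"
  have cL: "c \<in> L" "c \<le> lj" "c \<le> q" using meet_in meet_le1 meet_le2 lj(1) pq c_def by auto
  have gc: "g \<le> c" using meet_glb[OF lj(1) pq(2) g(1) lj(3) g(3)] c_def by simp
  have "c \<in> LS p q" unfolding LS_def
    using cL gc g(2) join_exists[OF pq(1) cL(1) lj(1) lj(2) cL(2)] m_def by (auto intro: order_trans)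
  then have "c \<le> g" using lg(2)[OF pq] g_def by auto
  then have cg: "c = g" using gc by auto
  show "meet L (left_join L p q) q = lg p q" using cg c_def lj_def g_def by simp
  have "dd p lj + dd lj q = dd p q"
  proof -
    have "meet L p lj = p" using meet_absorb[OF pq(1) lj(1) lj(2)] .
    then show ?thesis unfolding dd_def using cg c_def md m_def by simp
  qed
  then show "left_join L p q \<in> Ipq L p q" using Ipq_I[OF pq lj(1)] lj_def by simp
qed

lemma lj_unique:
  assumes pq: "p \<in> L" "q \<in> L" and u: "u \<in> Ipq L p q"
    and r1: "rk L (meet L u p) = rk L p" and r2: "rk L (meet L u q) = rk L (lg p q)"
  shows "u = left_join L p q"
proof -
  note st = Ipq_struct[OF pq u]
  define a where "a = meet L u p"
  define b where "b = meet L u q"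
  have aL: "a \<in> L" "a \<le> p" using meet_in meet_le2 pq st(1) a_def by auto
  have "a = p" using rk_eq[OF aL(1) pq(1) aL(2)] r1 a_def by simp
  have bL: "b \<in> L" "b \<le> q" "b \<le> u" using meet_in meet_le2 meet_le1 pq st(1) b_def by auto
  have mb: "meet L p q \<le> b" using meet_glb[OF st(1) pq(2) meet_in[OF pq] st(2) meet_le2[OF pq]] b_def by simp
  have "b \<in> LS p q" unfolding LS_def using bL mb st(3) \<open>a = p\<close> a_def b_def by auto
  then have "b \<le> lg p q" using lg(2)[OF pq] by auto
  then have "b = lg p q" using rk_eq[OF bL(1) _ _ ] r2 b_def lg(1)[OF pq] unfolding LS_def by auto
  then show ?thesis using st(4) left_join_lg[OF pq] \<open>a = p\<close> a_def b_def by simp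
qed

lemma Ipq_region:
  assumes pq: "p \<in> L" "q \<in> L" and u: "u \<in> Ipq L p q"
  shows "rk L (meet L u p) + rk L (meet L u q) \<le> rk L p + rk L (lg p q)"
    "rk L (meet L u p) \<le> rk L p" "rk L (meet L u q) \<le> rk L q"
proof -
  note st = Ipq_struct[OF pq u]
  have mL: "meet L p q \<in> L" using meet_in pq by auto
  have a: "meet L u p \<in> L" "meet L p q \<le> meet L u p" "meet L u p \<le> p"
    using meet_in meet_le2 meet_glb[OF st(1) pq(1) mL st(2) meet_le1[OF pq]] pq st(1) by auto
  have b: "meet L u q \<in> L" "meet L p q \<le> meet L u q" "meet L u q \<le> q"
    using meet_in meet_le2 meet_glb[OF st(1) pq(2) mL st(2) meet_le2[OF pq]] pq st(1) by auto
  show "rk L (meet L u p) + rk L (meet L u q) \<le> rk L p + rk L (lg p q)"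
    using region[OF pq a b st(3)] .
  show "rk L (meet L u p) \<le> rk L p" "rk L (meet L u q) \<le> rk L q" using rk_mono a b pq by auto
qed


lemma dd_sym: "x \<in> L \<Longrightarrow> y \<in> L \<Longrightarrow> dd x y = dd y x"
  unfolding dd_def using meet_comm by simp

lemma dd_tri:
  assumes "p \<in> L" "q \<in> L" "u \<in> L"
  shows "dd p q \<le> dd p u + dd u q"
proof -
  obtain xs where xs: "cpath L xs p u" "int (length xs) = dd p u + 1" using dist_path assms by blast
  obtain ys where ys: "cpath L ys u q" "int (length ys) = dd u q + 1" using dist_path assms by blast
  have c: "cpath L (xs @ tl ys) p q" using cpath_append[OF xs(1) ys(1)] .
  have "length ys \<ge> 1" using ys unfolding cpath_def by (cases ys) auto
  then have "int (length (xs @ tl ys)) = dd p u + dd u q + 1" using xs(2) ys(2) by (simp add: of_nat_diff)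
  then show ?thesis using path_lb[OF c] by simp
qed

lemma Ipq_iff:
  assumes pq: "p \<in> L" "q \<in> L"
  shows "u \<in> Ipq L p q \<longleftrightarrow> u \<in> L \<and> dd p u + dd u q = dd p q"
  using Ipq_sub[OF pq] Ipq_I[OF pq] dd_tri[OF pq] by force

lemma Ipq_sym: assumes pq: "p \<in> L" "q \<in> L" shows "Ipq L q p = Ipq L p q"
proof (rule set_eqI)
  fix u
  show "u \<in> Ipq L q p \<longleftrightarrow> u \<in> Ipq L p q"
    using Ipq_iff[OF pq, of u] Ipq_iff[OF pq(2) pq(1), of u] dd_sym pq by auto
qed

lemma rj_lj: assumes pq: "p \<in> L" "q \<in> L" shows "right_join L p q = left_join L q p"
  unfolding right_join_def left_join_def using meet_comm[OF pq] by simp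

theorem main:
  assumes pq: "p \<in> L" "q \<in> L"
  shows "frac_join L p q = (\<lambda>u. (if u = left_join L p q then 1/2 else 0) + (if u = right_join L p q then 1/2 else 0))"
proof -
  define m where "m = meet L p q"
  define g where "g = lg p q"
  define g' where "g' = lg q p"
  define lj where "lj = left_join L p q"
  define rj where "rj = left_join L q p"
  have rjd: "right_join L p q = rj" using rj_lj[OF pq] rj_def by simp
  have mqp: "meet L q p = m" using meet_comm[OF pq] m_def by simp
  note F1 = lj_facts[OF pq] and F2 = lj_facts[OF pq(2) pq(1)]
  have ljI: "lj \<in> Ipq L p q" using F1 lj_def by simp
  have rjI: "rj \<in> Ipq L p q" using F2 Ipq_sym[OF pq] rj_def by simp
  have ljI': "lj \<in> Ipq L q p" using ljI Ipq_sym[OF pq] by simp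
  have rjI': "rj \<in> Ipq L q p" using F2 rj_def by simp
  have lj1: "meet L lj p = p" "meet L lj q = g" using F1 lj_def g_def by auto
  have rj1: "meet L rj q = q" "meet L rj p = g'" using F2 rj_def g'_def by auto
  have gq: "rk L g \<le> rk L q" using rk_mono F1 pq g_def by auto
  have i1: "rk L g' + rk L q \<le> rk L p + rk L g" using Ipq_region(1)[OF pq rjI] rj1 g_def by simp
  have i2: "rk L g + rk L p \<le> rk L q + rk L g'" using Ipq_region(1)[OF pq(2) pq(1) ljI'] lj1 g'_def by simp
  have Seq: "rk L p + rk L g = rk L q + rk L g'" using i1 i2 by simp
  define A where "A = real (rk L p) - real (rk L m)"
  define B where "B = real (rk L q) - real (rk L m)"
  define S where "S = real (rk L p) + real (rk L g) - 2 * real (rk L m)"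
  have rlj: "rvec L lj p q = (A, S - A)" unfolding rvec_def using lj1 m_def A_def S_def by simp
  have rrj: "rvec L rj p q = (S - B, B)"
  proof -
    have "real (rk L p) + real (rk L g) = real (rk L q) + real (rk L g')" using Seq by (metis of_nat_add)
    then show ?thesis unfolding rvec_def using rj1 m_def B_def S_def by simp
  qed
  define X where "X = (\<lambda>u. rvec L u p q) ` Ipq L p q"
  interpret G: geo X A B S
  proof
    show "(A, S - A) \<in> X" using ljI rlj X_def by force
    show "(S - B, B) \<in> X" using rjI rrj X_def by force
    show "S \<le> A + B" using gq A_def B_def S_def by simp
    show "\<forall>z\<in>X. fst z \<le> A \<and> snd z \<le> B \<and> fst z + snd z \<le> S"
    proof
      fix z assume "z \<in> X"
      then obtain u where u: "u \<in> Ipq L p q" "z = rvec L u p q" using X_def by auto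
      have r: "rk L (meet L u p) + rk L (meet L u q) \<le> rk L p + rk L g"
        "rk L (meet L u p) \<le> rk L p" "rk L (meet L u q) \<le> rk L q"
        using Ipq_region[OF pq u(1)] g_def by auto
      have r': "real (rk L (meet L u p)) + real (rk L (meet L u q)) \<le> real (rk L p) + real (rk L g)"
        using r(1) by (metis of_nat_add of_nat_mono)
      show "fst z \<le> A \<and> snd z \<le> B \<and> fst z + snd z \<le> S"
        using u(2) r(2,3) r' unfolding rvec_def A_def B_def S_def m_def by simp
    qed
  qed
  have CI: "ConvI L p q = convex hull X" unfolding ConvI_def X_def by simp
  have Cone_eq: "Cone L u p q = G.coneH (rvec L u p q)" for u
    unfolding Cone_def G.coneH_def CI by simp
  have Epq_iff: "u \<in> Epq L p q \<longleftrightarrow> u = lj \<or> u = rj" for u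
  proof
    assume u: "u \<in> Epq L p q"
    then have uI: "u \<in> Ipq L p q" and ex: "rvec L u p q extreme_point_of convex hull X"
      and par: "\<forall>z\<in>convex hull X. fst (rvec L u p q) \<le> fst z \<and> snd (rvec L u p q) \<le> snd z \<longrightarrow> z = rvec L u p q"
      unfolding Epq_def CI by auto
    have "rvec L u p q = (A, S - A) \<or> rvec L u p q = (S - B, B)" using G.only[OF ex par] .
    then show "u = lj \<or> u = rj"
    proof
      assume "rvec L u p q = (A, S - A)"
      then have "rk L (meet L u p) = rk L p" "rk L (meet L u q) = rk L g"
        unfolding rvec_def A_def S_def m_def by auto
      then show ?thesis using lj_unique[OF pq uI] g_def lj_def by simp
    next
      assume h: "rvec L u p q = (S - B, B)"
      then have e1: "real (rk L (meet L u q)) = real (rk L q)"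
        unfolding rvec_def B_def m_def by auto
      have "real (rk L (meet L u p)) = real (rk L p) + real (rk L g) - real (rk L q)"
        using h unfolding rvec_def B_def S_def m_def by auto
      moreover have "real (rk L p) + real (rk L g) = real (rk L q) + real (rk L g')" using Seq by (metis of_nat_add)
      ultimately have e2: "real (rk L (meet L u p)) = real (rk L g')" by simp
      have "u \<in> Ipq L q p" using uI Ipq_sym[OF pq] by simp
      then have "u = rj" using lj_unique[OF pq(2) pq(1)] e1 e2 g'_def rj_def by simp
      then show ?thesis by simp
    qed
  next
    assume "u = lj \<or> u = rj"
    then show "u \<in> Epq L p q"
    proof
      assume "u = lj"
      then show ?thesis unfolding Epq_def CI using ljI rlj G.lp_ext G.lp_par by simp
    next
      assume "u = rj"
      then show ?thesis unfolding Epq_def CI using rjI rrj G.rp_ext G.rp_par by simp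
    qed
  qed
  show ?thesis
  proof (rule ext)
    fix u
    show "frac_join L p q u = (if u = left_join L p q then 1/2 else 0) + (if u = right_join L p q then 1/2 else 0)"
    proof (cases "A = S - B")
      case True
      then have "rvec L rj p q = (A, S - A)" using rrj by simp
      then have "rk L (meet L rj p) = rk L p" "rk L (meet L rj q) = rk L g"
        unfolding rvec_def A_def S_def m_def by auto
      then have rl: "rj = lj" using lj_unique[OF pq rjI] g_def lj_def by simp
      have "cone_weight (Cone L lj p q) = 1"
        using Cone_eq[of lj] rlj G.cone_deg[OF True] cw_full by simp
      then show ?thesis unfolding frac_join_def using Epq_iff rl rjd lj_def by auto
    next
      case False
      then have ne: "lj \<noteq> rj" using rlj rrj by auto
      have "cone_weight (Cone L lj p q) = 1/2"
        using Cone_eq[of lj] rlj G.cone_lp[OF False] cw_low by simp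
      moreover have "cone_weight (Cone L rj p q) = 1/2"
        using Cone_eq[of rj] rrj G.cone_rp[OF False] cw_high by simp
      ultimately show ?thesis unfolding frac_join_def using Epq_iff ne rjd lj_def by auto
    qed
  qed
qed

end



theorem theorem3p6:
  fixes L :: "'a::order set" and Frames :: "'a set set" and n :: nat
  assumes "polar_space L Frames n"
    and "p \<in> L" and "q \<in> L"
  shows "frac_join L p q =
    (\<lambda>u. (if u = left_join L p q then 1/2 else 0) + (if u = right_join L p q then 1/2 else 0))"
  by (rule pspace.main[OF pspace.intro[OF assms(1)] assms(2,3)])

end
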